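(* Consider the rank-one construction with $p_n$ even, $s_{n,j}=0$ for $0\le j<p_n/2$ and $s_{n,j}=1$ for $p_n/2\le j<p_n$, and assume $p_n/h_n\to\infty$. Let $0<\alpha<1$ and let $(\ell_n)$ be integers such that $\ell_n$ is a multiple of $h_n+1$ for every $n$ and $\ell_n=\alpha p_n/2+o(p_n)$. Then $U_T^{-\ell_nh_n}\to\alpha\Theta+(1-\alpha)\mathrm{Id}$ weakly as $n\to\infty$.
   Context: Rank-one construction: parameters $p_n\ge2$, $s_{n,i}\ge0$; $h_1=1$, $h_{n+1}=p_nh_n+\sum_is_{n,i}$; $T$ is the map obtained by cutting and stacking (at stage $n$ the tower of height $h_n$ is cut into $p_n$ equal columns, $s_{n,i}$ spacers put above column $i$, column $i+1$ stacked on column $i$), on a probability space. $U_Tf=f\circ T$ on $L^2$; $\Theta$ is the orthogonal projection onto the constant functions. *)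

theory Defs
  imports "HOL-Probability.Probability" "HOL-Library.Landau_Symbols"
begin

text \<open>Heights of the rank-one towers (stages indexed from 0, so that
  h 0 = 1 plays the role of h_1 in the paper).\<close>
fun rk1_height :: "(nat \<Rightarrow> nat) \<Rightarrow> (nat \<Rightarrow> nat \<Rightarrow> nat) \<Rightarrow> nat \<Rightarrow> nat" where
  "rk1_height p s 0 = 1"
| "rk1_height p s (Suc n) = p n * rk1_height p s n + (\<Sum>i<p n. s n i)"

definition ipow :: "('a \<Rightarrow> 'a) \<Rightarrow> ('a \<Rightarrow> 'a) \<Rightarrow> int \<Rightarrow> 'a \<Rightarrow> 'a" where
  "ipow T Tinv k = (if k \<ge> 0 then T ^^ nat k else Tinv ^^ nat (- k))"

text \<open>(M, T) is an invertible measure-preserving system on a probability space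
  realising the rank-one cutting-and-stacking construction with parameters p, s:
  B n is the base of the n-th tower (levels T^k(B n), k < h n), C n i the i-th column
  (i < p n); column i, raised by h n plus the s n i spacers above it, is column i+1;
  the base of tower n+1 is column 0 of tower n; and the towers generate the
  measurable sets (every measurable set is approximated by unions of levels).\<close>
definition rank_one_system ::
  "'a measure \<Rightarrow> ('a \<Rightarrow> 'a) \<Rightarrow> ('a \<Rightarrow> 'a) \<Rightarrow> (nat \<Rightarrow> nat) \<Rightarrow> (nat \<Rightarrow> nat \<Rightarrow> nat)
     \<Rightarrow> (nat \<Rightarrow> 'a set) \<Rightarrow> (nat \<Rightarrow> nat \<Rightarrow> 'a set) \<Rightarrow> bool" where
  "rank_one_system M T Tinv p s B C \<longleftrightarrow>
     prob_space M \<and>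
     T \<in> measurable M M \<and> Tinv \<in> measurable M M \<and>
     (\<forall>x\<in>space M. Tinv (T x) = x \<and> T (Tinv x) = x) \<and>
     distr M M T = M \<and>
     (\<forall>n. p n \<ge> 2) \<and>
     (\<forall>n. B n \<in> sets M) \<and>
     (\<forall>n i. i < p n \<longrightarrow> C n i \<in> sets M) \<and>
     (\<forall>n. B n = (\<Union>i<p n. C n i)) \<and>
     (\<forall>n i j. i < p n \<longrightarrow> j < p n \<longrightarrow> i \<noteq> j \<longrightarrow> C n i \<inter> C n j = {}) \<and>
     (\<forall>n k j. k < rk1_height p s n \<longrightarrow> j < rk1_height p s n \<longrightarrow> k \<noteq> j \<longrightarrow>
         (T ^^ k) ` B n \<inter> (T ^^ j) ` B n = {}) \<and>
     (\<forall>n i. Suc i < p n \<longrightarrow>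
         (T ^^ (rk1_height p s n + s n i)) ` C n i = C n (Suc i)) \<and>
     (\<forall>n. B (Suc n) = C n 0) \<and>
     (\<forall>A\<in>sets M. \<forall>e>0. \<exists>n F. F \<subseteq> {..<rk1_height p s n} \<and>
         measure M ((A - (\<Union>k\<in>F. (T ^^ k) ` B n)) \<union> ((\<Union>k\<in>F. (T ^^ k) ` B n) - A)) < e)"

definition square_integrable :: "'a measure \<Rightarrow> ('a \<Rightarrow> complex) \<Rightarrow> bool" where
  "square_integrable M f \<longleftrightarrow> f \<in> borel_measurable M \<and> integrable M (\<lambda>x. (norm (f x))\<^sup>2)"

end

theory Submission
  imports Defs
begin

locale r1 =
  fixes M :: "'a measure" and T Tinv :: "'a \<Rightarrow> 'a"
    and p :: "nat \<Rightarrow> nat" and s :: "nat \<Rightarrow> nat \<Rightarrow> nat"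
    and B :: "nat \<Rightarrow> 'a set" and C :: "nat \<Rightarrow> nat \<Rightarrow> 'a set"
  assumes sys: "rank_one_system M T Tinv p s B C"
begin

lemmas sysD = sys[unfolded rank_one_system_def]
lemma ps: "prob_space M" by (rule conjunct1[OF sysD])

sublocale prob_space M by (rule ps)

lemma T_meas: "T \<in> measurable M M" using conjunct1[OF conjunct2[OF sysD]] by blast
lemma Tinv_meas: "Tinv \<in> measurable M M" using conjunct1[OF conjunct2[OF conjunct2[OF sysD]]] by blast
lemma inv1: "x \<in> space M \<Longrightarrow> Tinv (T x) = x" using conjunct1[OF conjunct2[OF conjunct2[OF conjunct2[OF sysD]]]] by blast
lemma inv2: "x \<in> space M \<Longrightarrow> T (Tinv x) = x" using conjunct1[OF conjunct2[OF conjunct2[OF conjunct2[OF sysD]]]] by blast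
lemma distrT: "distr M M T = M" using conjunct1[OF conjunct2[OF conjunct2[OF conjunct2[OF conjunct2[OF sysD]]]]] by blast
lemma p2: "p n \<ge> 2" using conjunct1[OF conjunct2[OF conjunct2[OF conjunct2[OF conjunct2[OF conjunct2[OF sysD]]]]]] by blast
lemma B_sets: "B n \<in> sets M" using conjunct1[OF conjunct2[OF conjunct2[OF conjunct2[OF conjunct2[OF conjunct2[OF conjunct2[OF sysD]]]]]]] by blast
lemma C_sets: "i < p n \<Longrightarrow> C n i \<in> sets M" using conjunct1[OF conjunct2[OF conjunct2[OF conjunct2[OF conjunct2[OF conjunct2[OF conjunct2[OF conjunct2[OF sysD]]]]]]]] by blast
lemma B_C: "B n = (\<Union>i<p n. C n i)" using conjunct1[OF conjunct2[OF conjunct2[OF conjunct2[OF conjunct2[OF conjunct2[OF conjunct2[OF conjunct2[OF conjunct2[OF sysD]]]]]]]]] by blast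
lemma C_disj: "i < p n \<Longrightarrow> j < p n \<Longrightarrow> i \<noteq> j \<Longrightarrow> C n i \<inter> C n j = {}"
  using conjunct1[OF conjunct2[OF conjunct2[OF conjunct2[OF conjunct2[OF conjunct2[OF conjunct2[OF conjunct2[OF conjunct2[OF conjunct2[OF sysD]]]]]]]]]] by blast
lemma lev_disj0: "k < rk1_height p s n \<Longrightarrow> j < rk1_height p s n \<Longrightarrow> k \<noteq> j \<Longrightarrow>
         (T ^^ k) ` B n \<inter> (T ^^ j) ` B n = {}"
  using conjunct1[OF conjunct2[OF conjunct2[OF conjunct2[OF conjunct2[OF conjunct2[OF conjunct2[OF conjunct2[OF conjunct2[OF conjunct2[OF conjunct2[OF sysD]]]]]]]]]]] by blast
lemma C_step: "Suc i < p n \<Longrightarrow> (T ^^ (rk1_height p s n + s n i)) ` C n i = C n (Suc i)"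
  using conjunct1[OF conjunct2[OF conjunct2[OF conjunct2[OF conjunct2[OF conjunct2[OF conjunct2[OF conjunct2[OF conjunct2[OF conjunct2[OF conjunct2[OF conjunct2[OF sysD]]]]]]]]]]]] by blast
lemma B_Suc: "B (Suc n) = C n 0" using conjunct1[OF conjunct2[OF conjunct2[OF conjunct2[OF conjunct2[OF conjunct2[OF conjunct2[OF conjunct2[OF conjunct2[OF conjunct2[OF conjunct2[OF conjunct2[OF conjunct2[OF sysD]]]]]]]]]]]]] by blast
lemma approx: "A \<in> sets M \<Longrightarrow> e > 0 \<Longrightarrow> \<exists>n F. F \<subseteq> {..<rk1_height p s n} \<and>
         measure M ((A - (\<Union>k\<in>F. (T ^^ k) ` B n)) \<union> ((\<Union>k\<in>F. (T ^^ k) ` B n) - A)) < e"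
  using conjunct2[OF conjunct2[OF conjunct2[OF conjunct2[OF conjunct2[OF conjunct2[OF conjunct2[OF conjunct2[OF conjunct2[OF conjunct2[OF conjunct2[OF conjunct2[OF conjunct2[OF sysD]]]]]]]]]]]]] by blast

lemma T_space: "x \<in> space M \<Longrightarrow> T x \<in> space M"
  using T_meas by (meson measurable_space)
lemma Tinv_space: "x \<in> space M \<Longrightarrow> Tinv x \<in> space M"
  using Tinv_meas by (meson measurable_space)
lemma Tk_meas: "T ^^ k \<in> measurable M M" by (rule measurable_compose_n[OF T_meas])
lemma Tinvk_meas: "Tinv ^^ k \<in> measurable M M" by (rule measurable_compose_n[OF Tinv_meas])
lemma Tk_space: "x \<in> space M \<Longrightarrow> (T ^^ k) x \<in> space M"
  using Tk_meas by (meson measurable_space)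
lemma Tinvk_space: "x \<in> space M \<Longrightarrow> (Tinv ^^ k) x \<in> space M"
  using Tinvk_meas by (meson measurable_space)

lemma invk1: "x \<in> space M \<Longrightarrow> (Tinv ^^ k) ((T ^^ k) x) = x"
proof (induction k arbitrary: x)
  case (Suc k)
  have "(Tinv ^^ Suc k) ((T ^^ Suc k) x) = (Tinv ^^ k) (Tinv (T ((T ^^ k) x)))"
    by (simp add: funpow_swap1)
  also have "\<dots> = x" using Suc Tk_space inv1 by simp
  finally show ?case .
qed simp

lemma invk2: "x \<in> space M \<Longrightarrow> (T ^^ k) ((Tinv ^^ k) x) = x"
proof (induction k arbitrary: x)
  case (Suc k)
  have "(T ^^ Suc k) ((Tinv ^^ Suc k) x) = (T ^^ k) (T (Tinv ((Tinv ^^ k) x)))"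
    by (simp add: funpow_swap1)
  also have "\<dots> = x" using Suc Tinvk_space inv2 by simp
  finally show ?case .
qed simp

lemma img_eq: "X \<subseteq> space M \<Longrightarrow> (T ^^ k) ` X = {x \<in> space M. (Tinv ^^ k) x \<in> X}"
proof safe
  fix x assume "X \<subseteq> space M" "x \<in> X"
  then show "(T ^^ k) x \<in> space M" "(Tinv ^^ k) ((T ^^ k) x) \<in> X"
    using Tk_space invk1 by auto
next
  fix x assume "x \<in> space M" "(Tinv ^^ k) x \<in> X"
  then show "x \<in> (T ^^ k) ` X" using invk2 by (metis image_eqI)
qed

lemma sets_space: "X \<in> sets M \<Longrightarrow> X \<subseteq> space M" by (rule sets.sets_into_space)

lemma img_sets: "X \<in> sets M \<Longrightarrow> (T ^^ k) ` X \<in> sets M"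
proof -
  assume X: "X \<in> sets M"
  have "(T ^^ k) ` X = (Tinv ^^ k) -` X \<inter> space M"
    using img_eq[OF sets_space[OF X]] by auto
  then show ?thesis using measurable_sets[OF Tinvk_meas X] by simp
qed

lemma Tk_inj: "inj_on (T ^^ k) (space M)"
  by (metis inj_onI invk1)

lemma distr_Tk: "distr M M (T ^^ k) = M"
proof (induction k)
  case 0
  then show ?case by (simp add: distr_id2)
next
  case (Suc k)
  have "distr M M (T ^^ Suc k) = distr M M (T \<circ> T ^^ k)" by simp
  also have "\<dots> = distr (distr M M (T ^^ k)) M T"
    by (rule distr_distr[symmetric, OF T_meas Tk_meas])
  also have "\<dots> = M" using Suc distrT by simp
  finally show ?case .
qed

lemma measure_img: "X \<in> sets M \<Longrightarrow> measure M ((T ^^ k) ` X) = measure M X"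
proof -
  assume X: "X \<in> sets M"
  have "measure M ((T ^^ k) ` X) = measure (distr M M (T ^^ k)) ((T ^^ k) ` X)"
    using distr_Tk by simp
  also have "\<dots> = measure M ((T ^^ k) -` ((T ^^ k) ` X) \<inter> space M)"
    by (rule measure_distr[OF Tk_meas img_sets[OF X]])
  also have "(T ^^ k) -` ((T ^^ k) ` X) \<inter> space M = X"
    using sets_space[OF X] Tk_inj[of k] by (auto simp: inj_on_def)
  finally show ?thesis .
qed

lemma img_add: "(T ^^ (a + b)) ` X = (T ^^ a) ` ((T ^^ b) ` X)"
  by (simp add: funpow_add image_comp)

lemma img_disj: "X \<subseteq> space M \<Longrightarrow> Y \<subseteq> space M \<Longrightarrow> X \<inter> Y = {} \<Longrightarrow>
   (T ^^ k) ` X \<inter> (T ^^ k) ` Y = {}"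
  using Tk_inj[of k] unfolding inj_on_def by blast

end

locale r1h = r1 +
  assumes p_even: "\<forall>n. even (p n)"
    and s_def: "\<forall>n j. j < p n \<longrightarrow> s n j = (if j < p n div 2 then 0 else 1)"
begin

abbreviation "ht n \<equiv> rk1_height p s n"
definition "q n = p n div 2"
definition "off n i = i * ht n + (i - q n)"
definition "Lev n k = (T ^^ k) ` B n"
definition "\<beta> n = measure M (B n)"

lemma s_eq: "j < p n \<Longrightarrow> s n j = (if j < q n then 0 else 1)"
  using s_def q_def by simp

lemma p_2q: "p n = 2 * q n" using p_even q_def by auto
lemma q_pos: "q n \<ge> 1" using p2[of n] p_2q[of n] by simp

lemma sum_s: "(\<Sum>i<p n. s n i) = q n"
proof -
  have "(\<Sum>i<p n. s n i) = (\<Sum>i<p n. (if q n \<le> i then 1 else 0))"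
    by (rule sum.cong) (auto simp: s_eq)
  also have "\<dots> = card {i\<in>{..<p n}. q n \<le> i}"
    by (simp add: sum.If_cases Int_def)
  also have "{i\<in>{..<p n}. q n \<le> i} = {q n..<p n}" by auto
  also have "card \<dots> = q n" using p_2q[of n] by simp
  finally show ?thesis .
qed

lemma ht_Suc: "ht (Suc n) = p n * ht n + q n"
  using sum_s by simp

lemma ht_pos: "ht n \<ge> 1"
proof (induction n)
  case (Suc n)
  then show ?case using ht_Suc[of n] p2[of n] q_pos[of n] by simp
qed simp

lemma ht_ge: "ht (Suc n) \<ge> 2 * ht n"
  using ht_Suc[of n] p2[of n] by (metis le_add1 mult_le_mono1 order_trans)

lemma off_Suc: "i < p n \<Longrightarrow> off n (Suc i) = off n i + ht n + s n i"
  unfolding off_def using s_eq[of i n] by (auto simp: Suc_diff_le)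

lemma off_0: "off n 0 = 0" by (simp add: off_def)

lemma col: "i < p n \<Longrightarrow> (T ^^ off n i) ` B (Suc n) = C n i"
proof (induction i)
  case 0
  then show ?case by (simp add: off_0 B_Suc)
next
  case (Suc i)
  have "(T ^^ off n (Suc i)) ` B (Suc n) = (T ^^ (ht n + s n i)) ` (T ^^ off n i) ` B (Suc n)"
  proof -
    have e: "off n (Suc i) = (ht n + s n i) + off n i" using off_Suc[of i n] Suc.prems by simp
    show ?thesis by (simp only: e img_add)
  qed
  also have "\<dots> = C n (Suc i)" using Suc C_step[of i n] by simp
  finally show ?case .
qed

lemma Lev_sets: "Lev n k \<in> sets M" unfolding Lev_def by (rule img_sets[OF B_sets])
lemma measure_Lev: "measure M (Lev n k) = \<beta> n"
  unfolding Lev_def \<beta>_def by (rule measure_img[OF B_sets])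
lemma Lev_space: "Lev n k \<subseteq> space M" using Lev_sets sets_space by blast

lemma measure_C: "i < p n \<Longrightarrow> measure M (C n i) = \<beta> (Suc n)"
  using col[of i n] measure_img[OF B_sets, of "off n i" "Suc n"] \<beta>_def by simp

lemma \<beta>_Suc: "\<beta> n = p n * \<beta> (Suc n)"
proof -
  have "\<beta> n = measure M (\<Union>i<p n. C n i)" using B_C \<beta>_def by simp
  also have "\<dots> = (\<Sum>i<p n. measure M (C n i))"
    by (rule finite_measure_finite_Union) (auto simp: C_sets disjoint_family_on_def C_disj)
  also have "\<dots> = p n * \<beta> (Suc n)" using measure_C by simp
  finally show ?thesis .
qed

lemma Lev_Suc: "Lev n k = (\<Union>i<p n. Lev (Suc n) (off n i + k))"
proof -
  have "Lev n k = (\<Union>i<p n. (T ^^ k) ` C n i)" unfolding Lev_def using B_C[of n] by auto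
  also have "\<dots> = (\<Union>i<p n. Lev (Suc n) (off n i + k))"
  proof (rule SUP_cong[OF refl])
    fix i assume "i \<in> {..<p n}"
    then show "(T ^^ k) ` C n i = Lev (Suc n) (off n i + k)"
      using col[of i n] img_add[of k "off n i"] unfolding Lev_def by (simp add: add.commute)
  qed
  finally show ?thesis .
qed

lemma off_mono: "i < i' \<Longrightarrow> off n i + ht n \<le> off n i'"
proof -
  assume "i < i'"
  then have "Suc i \<le> i'" by simp
  then have "Suc i * ht n \<le> i' * ht n" by (rule mult_le_mono1)
  moreover have "i - q n \<le> i' - q n" using \<open>i < i'\<close> by simp
  ultimately show ?thesis unfolding off_def by simp
qed

lemma off_bound: "i < p n \<Longrightarrow> k < ht n \<Longrightarrow> off n i + k < ht (Suc n)"
proof -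
  assume a: "i < p n" "k < ht n"
  have "Suc i * ht n \<le> p n * ht n" using a by (intro mult_le_mono1) simp
  then have "i * ht n + k < p n * ht n" using a by simp
  moreover have "i - q n \<le> q n" using a p_2q[of n] by simp
  ultimately show ?thesis unfolding off_def ht_Suc by simp
qed

lemma off_inj: "i < p n \<Longrightarrow> i' < p n \<Longrightarrow> k < ht n \<Longrightarrow> k' < ht n \<Longrightarrow>
    off n i + k = off n i' + k' \<Longrightarrow> i = i' \<and> k = k'"
proof -
  assume a: "i < p n" "i' < p n" "k < ht n" "k' < ht n" "off n i + k = off n i' + k'"
  have "i = i'"
  proof (rule ccontr)
    assume "i \<noteq> i'"
    then have "i < i' \<or> i' < i" by arith
    then show False using off_mono[of i i' n] off_mono[of i' i n] a by auto
  qed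
  then show ?thesis using a by simp
qed

lemma off_spacer: "i < p n \<Longrightarrow> q n \<le> i \<Longrightarrow> i' < p n \<Longrightarrow> k' < ht n \<Longrightarrow>
    off n i + ht n \<noteq> off n i' + k'"
proof
  assume a: "i < p n" "q n \<le> i" "i' < p n" "k' < ht n" "off n i + ht n = off n i' + k'"
  show False
  proof (cases "i' \<le> i")
    case True
    then have "off n i' \<le> off n i"
      using off_mono[of i' i n] by (cases "i' = i") auto
    then show ?thesis using a by simp
  next
    case False
    then have "off n (Suc i) \<le> off n i'" using off_mono[of "Suc i" i' n]
      by (cases "Suc i = i'") auto
    moreover have "off n (Suc i) = off n i + ht n + 1" using off_Suc[of i n] a s_eq[of i n] by simp
    ultimately show ?thesis using a by simp
  qed
qed

lemma Lev_disj: "k < ht n \<Longrightarrow> j < ht n \<Longrightarrow> k \<noteq> j \<Longrightarrow> Lev n k \<inter> Lev n j = {}"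
  unfolding Lev_def by (rule lev_disj0)

lemma measure_UL: "K \<subseteq> {..<ht n} \<Longrightarrow> measure M (\<Union>k\<in>K. Lev n k) = card K * \<beta> n"
proof -
  assume K: "K \<subseteq> {..<ht n}"
  then have fK: "finite K" using finite_subset by blast
  have "measure M (\<Union>k\<in>K. Lev n k) = (\<Sum>k\<in>K. measure M (Lev n k))"
    apply (rule finite_measure_finite_Union[OF fK])
    using K Lev_disj[of _ n] by (auto simp: Lev_sets disjoint_family_on_def subset_iff)
  then show ?thesis using measure_Lev by simp
qed

lemma UL_sets: "(\<Union>k\<in>K. Lev n k) \<in> sets M" if "finite K"
  using that by (intro sets.finite_UN) (auto simp: Lev_sets)

lemma UL_int: "K \<subseteq> {..<ht n} \<Longrightarrow> J \<subseteq> {..<ht n} \<Longrightarrow>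
    (\<Union>k\<in>K. Lev n k) \<inter> (\<Union>k\<in>J. Lev n k) = (\<Union>k\<in>K\<inter>J. Lev n k)"
  using Lev_disj[of _ n] by (auto simp: subset_iff) blast

lemma UL_Suc: "K \<subseteq> {..<ht n} \<Longrightarrow> \<exists>K'. K' \<subseteq> {..<ht (Suc n)} \<and>
    (\<Union>k\<in>K. Lev n k) = (\<Union>k\<in>K'. Lev (Suc n) k)"
proof -
  assume K: "K \<subseteq> {..<ht n}"
  define K' where "K' = (\<lambda>(i,k). off n i + k) ` ({..<p n} \<times> K)"
  have "K' \<subseteq> {..<ht (Suc n)}" using K off_bound unfolding K'_def by auto
  moreover have "(\<Union>k\<in>K. Lev n k) = (\<Union>k\<in>K'. Lev (Suc n) k)"
    unfolding K'_def by (auto simp: Lev_Suc[of n])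
  ultimately show ?thesis by blast
qed

lemma UL_ge: "n0 \<le> n \<Longrightarrow> K \<subseteq> {..<ht n0} \<Longrightarrow> \<exists>K'. K' \<subseteq> {..<ht n} \<and>
    (\<Union>k\<in>K. Lev n0 k) = (\<Union>k\<in>K'. Lev n k)"
proof (induction n rule: dec_induct)
  case base
  then show ?case by blast
next
  case (step m)
  then obtain K' where "K' \<subseteq> {..<ht m}" "(\<Union>k\<in>K. Lev n0 k) = (\<Union>k\<in>K'. Lev m k)" by blast
  then show ?case using UL_Suc[of K' m] by metis
qed

lemma tower_le1: "ht n * \<beta> n \<le> 1"
proof -
  have "ht n * \<beta> n = measure M (\<Union>k\<in>{..<ht n}. Lev n k)" using measure_UL[of "{..<ht n}" n] by simp
  also have "\<dots> \<le> 1" by (rule prob_le_1)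
  finally show ?thesis .
qed

lemma \<beta>_nonneg: "\<beta> n \<ge> 0" unfolding \<beta>_def by simp

lemma tower_mono: "ht n * \<beta> n \<le> ht (Suc n) * \<beta> (Suc n)"
proof -
  have "ht n * \<beta> n = (p n * ht n) * \<beta> (Suc n)" using \<beta>_Suc[of n] by simp
  also have "\<dots> \<le> ht (Suc n) * \<beta> (Suc n)"
    using ht_Suc[of n] \<beta>_nonneg[of "Suc n"] by (intro mult_right_mono) auto
  finally show ?thesis .
qed

end

lemma mod_inj_coprime:
  fixes M a b :: nat
  assumes cop: "coprime a M" and d: "d < M" and d': "d' < M"
    and eq: "(d * a + b) mod M = (d' * a + b) mod M"
  shows "d = d'"
proof -
  have "int ((d * a + b) mod M) = int ((d' * a + b) mod M)" using eq by simp
  then have "(int d * int a + int b) mod int M = (int d' * int a + int b) mod int M"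
    by (simp add: zmod_int)
  then have "int M dvd (int d * int a + int b) - (int d' * int a + int b)"
    by (simp add: mod_eq_dvd_iff)
  then have "int M dvd (int d - int d') * int a" by (simp add: algebra_simps)
  moreover have "coprime (int M) (int a)" using cop by (simp add: coprime_commute)
  ultimately have "int M dvd (int d - int d')" using coprime_dvd_mult_left_iff by blast
  moreover have "\<bar>int d - int d'\<bar> < int M" using d d' by simp
  ultimately have "int d - int d' = 0" using dvd_imp_le_int[of "int d - int d'" "int M"] by linarith
  then show ?thesis by simp
qed

lemma count_block:
  fixes M a b :: nat
  assumes cop: "coprime a M" and J: "J \<subseteq> {..<M}"
  shows "card {d. d < M \<and> (d * a + b) mod M \<in> J} = card J"
proof -
  let ?f = "\<lambda>d. (d * a + b) mod M"
  have inj: "inj_on ?f {..<M}"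
  proof (rule inj_onI)
    fix x y assume "x \<in> {..<M}" "y \<in> {..<M}" "?f x = ?f y"
    then show "x = y" using mod_inj_coprime[OF cop, of x y b] by simp
  qed
  have img: "?f ` {..<M} = {..<M}"
  proof (rule card_subset_eq)
    show "?f ` {..<M} \<subseteq> {..<M}"
    proof
      fix y assume "y \<in> ?f ` {..<M}"
      then obtain d where d: "d < M" "y = ?f d" by auto
      then have "0 < M" by simp
      then show "y \<in> {..<M}" using d by simp
    qed
    show "card (?f ` {..<M}) = card {..<M}" by (rule card_image[OF inj])
  qed simp
  have "{d. d < M \<and> ?f d \<in> J} \<subseteq> {..<M}" by auto
  then have inj2: "inj_on ?f {d. d < M \<and> ?f d \<in> J}" using inj inj_on_subset by blast
  have "?f ` {d. d < M \<and> ?f d \<in> J} = J" using img J by auto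
  then show ?thesis using card_image[OF inj2] by simp
qed

lemma count_periodic:
  fixes M a b m :: nat
  assumes cop: "coprime a M" and J: "J \<subseteq> {..<M}"
  shows "card {d. d < m * M \<and> (d * a + b) mod M \<in> J} = m * card J"
proof (induction m)
  case 0
  then show ?case by simp
next
  case (Suc m)
  let ?P = "\<lambda>d. (d * a + b) mod M \<in> J"
  have split: "{d. d < Suc m * M \<and> ?P d} = {d. d < m * M \<and> ?P d} \<union> (\<lambda>d. m * M + d) ` {d. d < M \<and> ?P d}"
  proof (intro equalityI subsetI)
    fix x assume x: "x \<in> {d. d < Suc m * M \<and> ?P d}"
    show "x \<in> {d. d < m * M \<and> ?P d} \<union> (\<lambda>d. m * M + d) ` {d. d < M \<and> ?P d}"
    proof (cases "x < m * M")
      case True then show ?thesis using x by simp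
    next
      case False
      then have "x = m * M + (x - m * M)" "x - m * M < M" using x by auto
      moreover have "((x - m * M) * a + b) mod M = (x * a + b) mod M"
      proof -
        have "x * a + b = ((x - m * M) * a + b) + (m * a) * M"
          using \<open>x = m * M + (x - m * M)\<close> by (metis add.commute add.left_commute mult.commute mult.left_commute distrib_right)
        then show ?thesis by (metis mod_mult_self1)
      qed
      ultimately show ?thesis using x by (auto intro!: image_eqI[where x="x - m * M"])
    qed
  next
    fix x assume "x \<in> {d. d < m * M \<and> ?P d} \<union> (\<lambda>d. m * M + d) ` {d. d < M \<and> ?P d}"
    then show "x \<in> {d. d < Suc m * M \<and> ?P d}"
    proof
      assume "x \<in> {d. d < m * M \<and> ?P d}" then show ?thesis by auto
    next
      assume "x \<in> (\<lambda>d. m * M + d) ` {d. d < M \<and> ?P d}"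
      then obtain d where d: "d < M" "?P d" "x = m * M + d" by auto
      have "x * a + b = (d * a + b) + (m * a) * M" using d by (simp add: algebra_simps)
      then have "(x * a + b) mod M = (d * a + b) mod M" by (metis mod_mult_self1)
      then show ?thesis using d by simp
    qed
  qed
  have disj: "{d. d < m * M \<and> ?P d} \<inter> (\<lambda>d. m * M + d) ` {d. d < M \<and> ?P d} = {}" by auto
  have "card {d. d < Suc m * M \<and> ?P d} = card {d. d < m * M \<and> ?P d} + card ((\<lambda>d. m * M + d) ` {d. d < M \<and> ?P d})"
    unfolding split by (rule card_Un_disjoint) (use disj in auto)
  also have "card ((\<lambda>d. m * M + d) ` {d. d < M \<and> ?P d}) = card {d. d < M \<and> ?P d}"
    by (rule card_image) (auto simp: inj_on_def)
  also have "\<dots> = card J" by (rule count_block[OF cop J])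
  finally show ?case using Suc by simp
qed


lemma card_shift: "card {i::nat. a \<le> i \<and> i < a + L \<and> Q i} = card {d. d < L \<and> Q (a + d)}"
proof -
  have "{i. a \<le> i \<and> i < a + L \<and> Q i} = (\<lambda>d. a + d) ` {d. d < L \<and> Q (a + d)}"
  proof (intro equalityI subsetI)
    fix i assume "i \<in> {i. a \<le> i \<and> i < a + L \<and> Q i}"
    then show "i \<in> (\<lambda>d. a + d) ` {d. d < L \<and> Q (a + d)}"
      by (auto intro!: image_eqI[where x="i - a"])
  qed auto
  moreover have "inj_on (\<lambda>d. a + d) {d. d < L \<and> Q (a + d)}" by (auto simp: inj_on_def)
  ultimately show ?thesis by (simp add: card_image)
qed

context r1h
begin

definition "target n J P \<longleftrightarrow> (\<exists>j' i' k'. j' < p (Suc n) \<and> i' < p n \<and> k' \<in> J \<and>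
    P = off (Suc n) j' + off n i' + k')"

lemma G1:
  assumes J: "J \<subseteq> {..<ht n}" and j: "j < p (Suc n)" and i2: "i2 < p n" and k2: "k2 < ht n"
  shows "target n J (off (Suc n) j + (off n i2 + k2)) \<longleftrightarrow> k2 \<in> J"
proof
  assume "target n J (off (Suc n) j + (off n i2 + k2))"
  then obtain j' i' k' where t: "j' < p (Suc n)" "i' < p n" "k' \<in> J"
    "off (Suc n) j + (off n i2 + k2) = off (Suc n) j' + (off n i' + k')"
    unfolding target_def by auto
  have k': "k' < ht n" using t J by auto
  have "j = j' \<and> off n i2 + k2 = off n i' + k'"
    by (rule off_inj[OF j t(1) off_bound[OF i2 k2] off_bound[OF t(2) k'] t(4)])
  then have "i2 = i' \<and> k2 = k'" using off_inj[OF i2 t(2) k2 k'] by simp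
  then show "k2 \<in> J" using t by simp
next
  assume "k2 \<in> J"
  then show "target n J (off (Suc n) j + (off n i2 + k2))"
    unfolding target_def using j i2 by (auto simp: add.assoc)
qed

lemma G2:
  assumes J: "J \<subseteq> {..<ht n}" and j: "j < p (Suc n)" and i2: "i2 < p n" "q n \<le> i2"
  shows "\<not> target n J (off (Suc n) j + (off n i2 + ht n))"
proof
  assume "target n J (off (Suc n) j + (off n i2 + ht n))"
  then obtain j' i' k' where t: "j' < p (Suc n)" "i' < p n" "k' \<in> J"
    "off (Suc n) j + (off n i2 + ht n) = off (Suc n) j' + (off n i' + k')"
    unfolding target_def by auto
  have k': "k' < ht n" using t J by auto
  have b2: "off n i2 + ht n < ht (Suc n)"
  proof -
    have "Suc i2 * ht n \<le> p n * ht n" using i2 by (intro mult_le_mono1) simp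
    moreover have "i2 - q n < q n" using i2 p_2q[of n] by simp
    ultimately show ?thesis unfolding off_def ht_Suc by simp
  qed
  have "j = j' \<and> off n i2 + ht n = off n i' + k'"
    by (rule off_inj[OF j t(1) b2 off_bound[OF t(2) k'] t(4)])
  then show False using off_spacer[OF i2 t(2) k'] by simp
qed


lemma G3:
  assumes j: "j < p (Suc n)" "q (Suc n) \<le> j" and J: "J \<subseteq> {..<ht n}"
  shows "\<not> target n J (off (Suc n) j + ht (Suc n))"
proof
  assume "target n J (off (Suc n) j + ht (Suc n))"
  then obtain j' i' k' where t: "j' < p (Suc n)" "i' < p n" "k' \<in> J"
    "off (Suc n) j + ht (Suc n) = off (Suc n) j' + (off n i' + k')"
    unfolding target_def by (auto simp: add.assoc)
  have "k' < ht n" using t J by auto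
  then show False using off_spacer[OF j t(1) off_bound[OF t(2)]] t(4) by simp
qed

lemma off_low: "a \<le> q n \<Longrightarrow> off n a = a * ht n"
  unfolding off_def by simp

lemma HX: "x < q n * ht n \<Longrightarrow> x div ht n < q n \<and> x = off n (x div ht n) + x mod ht n"
proof -
  assume x: "x < q n * ht n"
  have h: "ht n > 0" using ht_pos[of n] by simp
  have "x div ht n < q n" using x h by (simp add: div_less_iff_less_mult)
  moreover have "off n (x div ht n) = x div ht n * ht n" using off_low calculation by simp
  ultimately show ?thesis by simp
qed


context
  fixes n m J j k
  assumes lq: "m * (ht n + 1) \<le> q n" and J: "J \<subseteq> {..<ht n}"
    and j: "j < p (Suc n)" and k: "k < ht n"
begin

lemma caseA:
  assumes i: "i + m * (ht n + 1) < q n"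
  shows "target n J (off (Suc n) j + off n i + k + m * (ht n + 1) * ht n) \<longleftrightarrow> k \<in> J"
proof -
  have "off n i + k + m * (ht n + 1) * ht n = off n (i + m * (ht n + 1)) + k"
    using i off_low[of i n] off_low[of "i + m * (ht n + 1)" n] by (simp add: algebra_simps)
  then have e: "off (Suc n) j + off n i + k + m * (ht n + 1) * ht n
      = off (Suc n) j + (off n (i + m * (ht n + 1)) + k)" by simp
  have "i + m * (ht n + 1) < p n" using i p_2q[of n] by simp
  then show ?thesis unfolding e by (rule G1[OF J j _ k])
qed

lemma caseC:
  assumes i: "q n \<le> i" "i + m * ht n < p n"
  shows "target n J (off (Suc n) j + off n i + k + m * (ht n + 1) * ht n) \<longleftrightarrow> k \<in> J"
proof -
  have "off n i + k + m * (ht n + 1) * ht n = off n (i + m * ht n) + k"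
    using i unfolding off_def by (simp add: algebra_simps)
  then have e: "off (Suc n) j + off n i + k + m * (ht n + 1) * ht n
      = off (Suc n) j + (off n (i + m * ht n) + k)" by simp
  show ?thesis unfolding e by (rule G1[OF J j i(2) k])
qed

lemma caseB:
  assumes i: "q n \<le> i + m * (ht n + 1)" "i < q n"
  shows "target n J (off (Suc n) j + off n i + k + m * (ht n + 1) * ht n) \<longleftrightarrow>
    ((i + m * (ht n + 1) - q n) * ht n + k) mod (ht n + 1) \<in> J"
proof -
  define d where "d = i + m * (ht n + 1) - q n"
  define c where "c = (d * ht n + k) div (ht n + 1)"
  define r where "r = (d * ht n + k) mod (ht n + 1)"
  have dl: "d < m * (ht n + 1)" using i unfolding d_def by simp
  have dr: "d * ht n + k = c * (ht n + 1) + r" unfolding c_def r_def by (metis div_mult_mod_eq)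
  have "d * ht n + k < (d + 1) * (ht n + 1)" using k by (simp add: algebra_simps)
  then have "(d * ht n + k) div (ht n + 1) < d + 1" by (rule less_mult_imp_div_less)
  then have cd: "c \<le> d" unfolding c_def by simp
  have cp: "q n + c < p n" using cd dl lq p_2q[of n] by simp
  have rh: "r \<le> ht n" unfolding r_def by simp
  have "off n i + k + m * (ht n + 1) * ht n = (i + m * (ht n + 1)) * ht n + k"
    using off_low[of i n] i by (simp add: algebra_simps)
  also have "\<dots> = q n * ht n + (d * ht n + k)"
  proof -
    have "i + m * (ht n + 1) = q n + d" using i unfolding d_def by simp
    then show ?thesis by (simp add: algebra_simps)
  qed
  also have "\<dots> = off n (q n + c) + r" unfolding dr off_def by (simp add: algebra_simps)
  finally have e: "off (Suc n) j + off n i + k + m * (ht n + 1) * ht n = off (Suc n) j + (off n (q n + c) + r)"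
    by simp
  show ?thesis
  proof (cases "r < ht n")
    case True
    show ?thesis unfolding e using G1[OF J j cp True] by (simp add: r_def d_def)
  next
    case False
    then have "r = ht n" using rh by simp
    moreover have "ht n \<notin> J" using J by auto
    ultimately show ?thesis unfolding e using G2[OF J j cp] by (simp add: r_def d_def)
  qed
qed


lemma caseD_pos:
  assumes i: "p n - m * ht n \<le> i" "i < p n"
  shows "off n i + k + m * (ht n + 1) * ht n = ht (Suc n) + ((i - (p n - m * ht n)) * (ht n + 1) + k)"
proof -
  define e where "e = i - (p n - m * ht n)"
  define a where "a = i - q n"
  have mh: "m * ht n \<le> q n" using lq by (metis add_lessD1 le_add1 le_trans mult_le_mono2 order_refl)
  have iq: "i = q n + a" using i mh p_2q[of n] unfolding a_def by simp
  have ae: "a + m * ht n = q n + e" using i mh p_2q[of n] unfolding a_def e_def by simp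
  have "off n i + k + m * (ht n + 1) * ht n = (q n + a) * ht n + a + k + m * (ht n + 1) * ht n"
    unfolding off_def using iq by simp
  also have "\<dots> = q n * ht n + (a + m * ht n) * ht n + (a + m * ht n) + k"
    by (simp add: algebra_simps)
  also have "\<dots> = q n * ht n + (q n + e) * ht n + (q n + e) + k" unfolding ae ..
  also have "\<dots> = ht (Suc n) + (e * (ht n + 1) + k)"
    unfolding ht_Suc p_2q[of n] by (simp add: algebra_simps)
  finally show ?thesis unfolding e_def .
qed

lemma caseD_x:
  assumes i: "p n - m * ht n \<le> i" "i < p n"
  shows "(i - (p n - m * ht n)) * (ht n + 1) + k < q n * ht n"
proof -
  define e where "e = i - (p n - m * ht n)"
  have mh: "m * ht n \<le> q n" using lq by (metis add_lessD1 le_add1 le_trans mult_le_mono2 order_refl)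
  have "e < m * ht n" using i mh p_2q[of n] unfolding e_def by simp
  then have "Suc e \<le> m * ht n" by simp
  then have "Suc e * (ht n + 1) \<le> m * ht n * (ht n + 1)" by (rule mult_le_mono1)
  also have "\<dots> = m * (ht n + 1) * ht n" by (simp add: algebra_simps)
  also have "\<dots> \<le> q n * ht n" using lq by (rule mult_le_mono1)
  finally have "Suc e * (ht n + 1) \<le> q n * ht n" .
  then show ?thesis using k unfolding e_def[symmetric] by (simp add: algebra_simps)
qed

lemma caseD0:
  assumes i: "p n - m * ht n \<le> i" "i < p n" and jj: "Suc j < p (Suc n)" "j < q (Suc n)"
  shows "target n J (off (Suc n) j + off n i + k + m * (ht n + 1) * ht n) \<longleftrightarrow>
     ((i - (p n - m * ht n)) * (ht n + 1) + k) mod ht n \<in> J"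
proof -
  define x where "x = (i - (p n - m * ht n)) * (ht n + 1) + k"
  have xq: "x < q n * ht n" using caseD_x[OF i] unfolding x_def .
  have os: "off (Suc n) (Suc j) = off (Suc n) j + ht (Suc n)"
    using off_Suc[of j "Suc n"] jj s_eq[of j "Suc n"] by simp
  have e: "off (Suc n) j + off n i + k + m * (ht n + 1) * ht n
     = off (Suc n) (Suc j) + (off n (x div ht n) + x mod ht n)"
    using caseD_pos[OF i] HX[OF xq] os unfolding x_def by simp
  have "x div ht n < p n" using HX[OF xq] p_2q[of n] by simp
  moreover have "x mod ht n < ht n" using ht_pos[of n] by simp
  ultimately show ?thesis unfolding e x_def[symmetric] by (rule G1[OF J jj(1)])
qed

lemma caseD1:
  assumes i: "p n - m * ht n \<le> i" "i < p n" and jj: "Suc j < p (Suc n)" "q (Suc n) \<le> j"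
  shows "target n J (off (Suc n) j + off n i + k + m * (ht n + 1) * ht n) \<longleftrightarrow>
     (1 \<le> (i - (p n - m * ht n)) * (ht n + 1) + k \<and>
      ((i - (p n - m * ht n)) * (ht n + 1) + k - 1) mod ht n \<in> J)"
proof -
  define x where "x = (i - (p n - m * ht n)) * (ht n + 1) + k"
  have xq: "x < q n * ht n" using caseD_x[OF i] unfolding x_def .
  have os: "off (Suc n) (Suc j) = off (Suc n) j + ht (Suc n) + 1"
    using off_Suc[of j "Suc n"] jj s_eq[of j "Suc n"] by simp
  show ?thesis
  proof (cases "x = 0")
    case True
    have e: "off (Suc n) j + off n i + k + m * (ht n + 1) * ht n = off (Suc n) j + ht (Suc n)"
      using caseD_pos[OF i] True unfolding x_def by simp
    show ?thesis unfolding e x_def[symmetric] using G3[OF _ jj(2) J] jj True by simp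
  next
    case False
    have xq': "x - 1 < q n * ht n" using xq by simp
    have d: "off n i + k + m * (ht n + 1) * ht n = ht (Suc n) + x"
      using caseD_pos[OF i] unfolding x_def .
    have h2: "x - 1 = off n ((x - 1) div ht n) + (x - 1) mod ht n" using HX[OF xq'] by simp
    have e: "off (Suc n) j + off n i + k + m * (ht n + 1) * ht n
       = off (Suc n) (Suc j) + (off n ((x - 1) div ht n) + (x - 1) mod ht n)"
      using d h2 os False by linarith
    have "(x - 1) div ht n < p n" using HX[OF xq'] p_2q[of n] by simp
    moreover have "(x - 1) mod ht n < ht n" using ht_pos[of n] by simp
    ultimately show ?thesis unfolding e x_def[symmetric] using G1[OF J jj(1)] False by simp
  qed
qed


lemma mh_le: "m * ht n \<le> q n" using lq by (metis add_lessD1 le_add1 le_trans mult_le_mono2 order_refl)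

lemma count_col:
  assumes jj: "Suc j < p (Suc n)"
  defines "S \<equiv> {i. i < p n \<and> target n J (off (Suc n) j + off n i + k + m * (ht n + 1) * ht n)}"
    and "c0 \<equiv> (if k \<in> J then (q n - m * (ht n + 1)) + (q n - m * ht n) else 0) + 2 * m * card J"
  shows "card S \<le> c0" "c0 \<le> card S + 1"
proof -
  let ?Tg = "\<lambda>i. target n J (off (Suc n) j + off n i + k + m * (ht n + 1) * ht n)"
  let ?l = "m * (ht n + 1)"
  define S1 where "S1 = {i. i < q n - ?l \<and> ?Tg i}"
  define S2 where "S2 = {i. q n - ?l \<le> i \<and> i < (q n - ?l) + ?l \<and> ?Tg i}"
  define S3 where "S3 = {i. q n \<le> i \<and> i < p n - m * ht n \<and> ?Tg i}"
  define S4 where "S4 = {i. p n - m * ht n \<le> i \<and> i < (p n - m * ht n) + m * ht n \<and> ?Tg i}"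
  have mh: "m * ht n \<le> q n" by (rule mh_le)
  have Sdec: "S = ((S1 \<union> S2) \<union> S3) \<union> S4"
    unfolding S_def S1_def S2_def S3_def S4_def using lq mh p_2q[of n] by auto
  have fin: "finite S1" "finite S2" "finite S3" "finite S4"
    unfolding S1_def S2_def S3_def S4_def by auto
  have d1: "S1 \<inter> S2 = {}" unfolding S1_def S2_def by auto
  have d2: "(S1 \<union> S2) \<inter> S3 = {}" unfolding S1_def S2_def S3_def using lq by auto
  have d3: "((S1 \<union> S2) \<union> S3) \<inter> S4 = {}" unfolding S1_def S2_def S3_def S4_def using lq mh p_2q[of n] by auto
  have cS: "card S = card S1 + card S2 + card S3 + card S4"
  proof -
    have "card S = card (S1 \<union> S2 \<union> S3) + card S4"
      unfolding Sdec by (rule card_Un_disjoint[OF _ _ d3]) (use fin in auto)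
    moreover have "card (S1 \<union> S2 \<union> S3) = card (S1 \<union> S2) + card S3"
      by (rule card_Un_disjoint[OF _ _ d2]) (use fin in auto)
    moreover have "card (S1 \<union> S2) = card S1 + card S2"
      by (rule card_Un_disjoint[OF _ _ d1]) (use fin in auto)
    ultimately show ?thesis by simp
  qed
  have c1: "card S1 = (if k \<in> J then q n - ?l else 0)"
  proof -
    have "S1 = (if k \<in> J then {..<q n - ?l} else {})"
      unfolding S1_def using caseA by auto
    then show ?thesis by simp
  qed
  have c3: "card S3 = (if k \<in> J then q n - m * ht n else 0)"
  proof -
    have "S3 = (if k \<in> J then {q n..<p n - m * ht n} else {})"
      unfolding S3_def using caseC by auto
    then show ?thesis using p_2q[of n] by simp
  qed
  have c2: "card S2 = m * card J"
  proof -
    have "card S2 = card {d. d < ?l \<and> ?Tg (q n - ?l + d)}" unfolding S2_def by (rule card_shift)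
    also have "card {d. d < ?l \<and> ?Tg (q n - ?l + d)} = card {d. d < m * (ht n + 1) \<and> (d * ht n + k) mod (ht n + 1) \<in> J}"
    proof -
      have "\<And>d. d < ?l \<Longrightarrow> ?Tg (q n - ?l + d) \<longleftrightarrow> (d * ht n + k) mod (ht n + 1) \<in> J"
      proof -
        fix d assume d: "d < ?l"
        have "?Tg (q n - ?l + d) \<longleftrightarrow> ((q n - ?l + d + ?l - q n) * ht n + k) mod (ht n + 1) \<in> J"
          by (rule caseB) (use d lq in auto)
        moreover have "q n - ?l + d + ?l - q n = d" using lq by simp
        ultimately show "?Tg (q n - ?l + d) \<longleftrightarrow> (d * ht n + k) mod (ht n + 1) \<in> J" by simp
      qed
      then show ?thesis by (intro arg_cong[where f=card]) auto
    qed
    also have "\<dots> = m * card J"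
      by (rule count_periodic) (use J in auto)
    finally show ?thesis .
  qed
  have c4: "card S4 \<le> m * card J \<and> m * card J \<le> card S4 + 1"
  proof -
    have "card S4 = card {e. e < m * ht n \<and> ?Tg (p n - m * ht n + e)}" unfolding S4_def by (rule card_shift)
    also have "p n - m * ht n + e - (p n - m * ht n) = e" for e by simp
    ultimately have cs: "card S4 = card {e. e < m * ht n \<and> ?Tg (p n - m * ht n + e)}" by simp
    have ip: "\<And>e. e < m * ht n \<Longrightarrow> p n - m * ht n \<le> p n - m * ht n + e \<and> p n - m * ht n + e < p n"
      using mh p_2q[of n] by auto
    show ?thesis
    proof (cases "j < q (Suc n)")
      case True
      have pt: "e < m * ht n \<Longrightarrow> ?Tg (p n - m * ht n + e) \<longleftrightarrow> (e * (ht n + 1) + k) mod ht n \<in> J" for e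
        using caseD0[OF _ _ jj True, of "p n - m * ht n + e"] ip[of e] by simp
      have "{e. e < m * ht n \<and> ?Tg (p n - m * ht n + e)} = {e. e < m * ht n \<and> (e * (ht n + 1) + k) mod ht n \<in> J}"
        using pt by blast
      also have "card \<dots> = m * card J" by (rule count_periodic) (use J in auto)
      finally show ?thesis using cs by simp
    next
      case False
      then have jq: "q (Suc n) \<le> j" by simp
      define X where "X = {e. e < m * ht n \<and> ?Tg (p n - m * ht n + e)}"
      define Y where "Y = {e. e < m * ht n \<and> (e * (ht n + 1) + (k + ht n - 1)) mod ht n \<in> J}"
      have X: "X = {e. e < m * ht n \<and> 1 \<le> e * (ht n + 1) + k \<and> (e * (ht n + 1) + k - 1) mod ht n \<in> J}"
      proof -
        have pt: "e < m * ht n \<Longrightarrow> ?Tg (p n - m * ht n + e) \<longleftrightarrow> (1 \<le> e * (ht n + 1) + k \<and> (e * (ht n + 1) + k - 1) mod ht n \<in> J)" for e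
          using caseD1[OF _ _ jj jq, of "p n - m * ht n + e"] ip[of e] by simp
        show ?thesis unfolding X_def using pt by blast
      qed
      have hp: "ht n \<ge> 1" by (rule ht_pos)
      have modeq: "1 \<le> e * (ht n + 1) + k \<Longrightarrow> (e * (ht n + 1) + k - 1) mod ht n = (e * (ht n + 1) + (k + ht n - 1)) mod ht n" for e
      proof -
        assume "1 \<le> e * (ht n + 1) + k"
        then have "e * (ht n + 1) + (k + ht n - 1) = (e * (ht n + 1) + k - 1) + ht n" using hp by simp
        then show ?thesis by simp
      qed
      have XY: "X \<subseteq> Y" unfolding X Y_def using modeq by auto
      have YX: "Y \<subseteq> insert 0 X"
      proof
        fix e assume e: "e \<in> Y"
        show "e \<in> insert 0 X"
        proof (cases "e = 0")
          case False
          then have "1 \<le> e * (ht n + 1) + k" by simp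
          then show ?thesis using e modeq[of e] unfolding X Y_def by auto
        qed simp
      qed
      have cY: "card Y = m * card J" unfolding Y_def by (rule count_periodic) (use J in auto)
      have fX: "finite X" unfolding X_def by auto
      have "card X \<le> card Y" using XY by (intro card_mono) (auto simp: Y_def)
      moreover have "card Y \<le> card (insert 0 X)" using YX fX by (intro card_mono) auto
      moreover have "card (insert 0 X) \<le> card X + 1" using fX by (simp add: card_insert_if)
      ultimately show ?thesis using cs cY unfolding X_def by simp
    qed
  qed
  show "card S \<le> c0" unfolding cS c0_def using c1 c2 c3 c4 by auto
  show "c0 \<le> card S + 1" unfolding cS c0_def using c1 c2 c3 c4 by auto
qed

end

end

context r1h
begin

lemma Lev_SS: "Lev n k = (\<Union>j<p (Suc n). \<Union>i<p n. Lev (Suc (Suc n)) (off (Suc n) j + off n i + k))"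
  unfolding Lev_Suc[of n k] Lev_Suc[of "Suc n"] by (auto simp: add.assoc)

lemma pos_bound: "i < p n \<Longrightarrow> j < p (Suc n) \<Longrightarrow> k < ht n \<Longrightarrow>
    off (Suc n) j + off n i + k < ht (Suc (Suc n))"
  using off_bound[of j "Suc n" "off n i + k"] off_bound[of i n k] by (simp add: add.assoc)

lemma pos_inj: "i < p n \<Longrightarrow> j < p (Suc n) \<Longrightarrow> k < ht n \<Longrightarrow>
    i' < p n \<Longrightarrow> j' < p (Suc n) \<Longrightarrow> k' < ht n \<Longrightarrow>
    off (Suc n) j + off n i + k = off (Suc n) j' + off n i' + k' \<Longrightarrow> j = j' \<and> i = i' \<and> k = k'"
  using off_inj[of j "Suc n" j' "off n i + k" "off n i' + k'"] off_bound[of i n k] off_bound[of i' n k']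
    off_inj[of i n i' k k'] by (simp add: add.assoc)

lemma Lev_img: "(T ^^ N) ` Lev n a = Lev n (a + N)"
  unfolding Lev_def using img_add[of N a] by (simp add: add.commute)


lemma meas_decomp:
  assumes K: "K \<subseteq> {..<ht n}" and J: "J \<subseteq> {..<ht n}"
  shows "measure M ((T ^^ N) ` (\<Union>k\<in>K. Lev n k) \<inter> (\<Union>k\<in>J. Lev n k)) =
    (\<Sum>k\<in>K. \<Sum>j<p (Suc n). \<Sum>i<p n.
       measure M (Lev (Suc (Suc n)) (off (Suc n) j + off n i + k + N) \<inter> (\<Union>k\<in>J. Lev n k)))"
proof -
  define F where "F = (\<Union>k\<in>J. Lev n k)"
  define Tr where "Tr = K \<times> ({..<p (Suc n)} \<times> {..<p n})"
  define U where "U = (\<lambda>(k, j, i). off (Suc n) j + off n i + k)"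
  have fK: "finite K" using K finite_subset by blast
  have fTr: "finite Tr" unfolding Tr_def using fK by simp
  have UB: "x \<in> Tr \<Longrightarrow> U x < ht (Suc (Suc n))" for x
    using K pos_bound unfolding Tr_def U_def by auto
  have Uinj: "x \<in> Tr \<Longrightarrow> y \<in> Tr \<Longrightarrow> U x = U y \<Longrightarrow> x = y" for x y
  proof -
    assume xy: "x \<in> Tr" "y \<in> Tr" "U x = U y"
    obtain k j i where x: "x = (k, j, i)" by (cases x) auto
    obtain k' j' i' where y: "y = (k', j', i')" by (cases y) auto
    have "j = j' \<and> i = i' \<and> k = k'"
      by (rule pos_inj[of i n j k i' j' k']) (use xy K in \<open>auto simp: x y Tr_def U_def\<close>)
    then show "x = y" using x y by simp
  qed
  have E: "(\<Union>k\<in>K. Lev n k) = (\<Union>x\<in>Tr. Lev (Suc (Suc n)) (U x))"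
    unfolding Tr_def U_def Lev_SS[of n] by fastforce
  have "(T ^^ N) ` (\<Union>k\<in>K. Lev n k) \<inter> F = (\<Union>x\<in>Tr. Lev (Suc (Suc n)) (U x + N) \<inter> F)"
    unfolding E image_UN Lev_img by auto
  then have "measure M ((T ^^ N) ` (\<Union>k\<in>K. Lev n k) \<inter> F) =
      measure M (\<Union>x\<in>Tr. Lev (Suc (Suc n)) (U x + N) \<inter> F)" by simp
  also have "\<dots> = (\<Sum>x\<in>Tr. measure M (Lev (Suc (Suc n)) (U x + N) \<inter> F))"
  proof (rule finite_measure_finite_Union[OF fTr])
    show "(\<lambda>x. Lev (Suc (Suc n)) (U x + N) \<inter> F) ` Tr \<subseteq> sets M"
      unfolding F_def using J finite_subset[OF J] by (auto intro!: sets.Int UL_sets simp: Lev_sets)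
    show "disjoint_family_on (\<lambda>x. Lev (Suc (Suc n)) (U x + N) \<inter> F) Tr"
    proof (unfold disjoint_family_on_def, intro ballI impI)
      fix x y assume xy: "x \<in> Tr" "y \<in> Tr" "x \<noteq> y"
      then have "U x \<noteq> U y" using Uinj by blast
      then have "Lev (Suc (Suc n)) (U x) \<inter> Lev (Suc (Suc n)) (U y) = {}"
        using Lev_disj UB xy by blast
      then have "(T ^^ N) ` Lev (Suc (Suc n)) (U x) \<inter> (T ^^ N) ` Lev (Suc (Suc n)) (U y) = {}"
        by (intro img_disj Lev_space)
      then show "(Lev (Suc (Suc n)) (U x + N) \<inter> F) \<inter> (Lev (Suc (Suc n)) (U y + N) \<inter> F) = {}"
        unfolding Lev_img by blast
    qed
  qed
  also have "\<dots> = (\<Sum>k\<in>K. \<Sum>j<p (Suc n). \<Sum>i<p n.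
       measure M (Lev (Suc (Suc n)) (off (Suc n) j + off n i + k + N) \<inter> F))"
    unfolding Tr_def U_def by (simp add: sum.cartesian_product split_def)
  finally show ?thesis unfolding F_def .
qed


lemma term_hit:
  assumes J: "J \<subseteq> {..<ht n}" and t: "target n J P"
  shows "measure M (Lev (Suc (Suc n)) P \<inter> (\<Union>k\<in>J. Lev n k)) = \<beta> (Suc (Suc n))"
proof -
  obtain j' i' k' where t: "j' < p (Suc n)" "i' < p n" "k' \<in> J"
    "P = off (Suc n) j' + off n i' + k'" using t unfolding target_def by auto
  have "Lev (Suc (Suc n)) P \<subseteq> Lev n k'" unfolding Lev_SS[of n k'] using t by auto
  then have "Lev (Suc (Suc n)) P \<inter> (\<Union>k\<in>J. Lev n k) = Lev (Suc (Suc n)) P" using t by auto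
  then show ?thesis using measure_Lev by simp
qed

lemma term_miss:
  assumes J: "J \<subseteq> {..<ht n}" and t: "\<not> target n J P" and P: "P < ht (Suc (Suc n))"
  shows "measure M (Lev (Suc (Suc n)) P \<inter> (\<Union>k\<in>J. Lev n k)) = 0"
proof -
  have "Lev (Suc (Suc n)) P \<inter> (\<Union>k\<in>J. Lev n k) = {}"
  proof -
    have "Lev (Suc (Suc n)) P \<inter> Lev (Suc (Suc n)) (off (Suc n) j + off n i + k) = {}"
      if "k \<in> J" "j < p (Suc n)" "i < p n" for k j i
    proof -
      have "off (Suc n) j + off n i + k \<noteq> P" using t that unfolding target_def by blast
      moreover have "off (Suc n) j + off n i + k < ht (Suc (Suc n))" using pos_bound that J by auto
      ultimately show ?thesis using Lev_disj P by blast
    qed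
    then show ?thesis unfolding Lev_SS[of n] by blast
  qed
  then show ?thesis by simp
qed

lemma term_le: "measure M (Lev (Suc (Suc n)) P \<inter> X) \<le> \<beta> (Suc (Suc n))"
  using finite_measure_mono[OF Int_lower1 Lev_sets] measure_Lev by simp

lemma col_sum:
  assumes J: "J \<subseteq> {..<ht n}" and lq: "m * (ht n + 1) \<le> q n" and jj: "Suc j < p (Suc n)" and k: "k < ht n"
  shows "(\<Sum>i<p n. measure M (Lev (Suc (Suc n)) (off (Suc n) j + off n i + k + m * (ht n + 1) * ht n) \<inter> (\<Union>k\<in>J. Lev n k)))
    = \<beta> (Suc (Suc n)) * card {i. i < p n \<and> target n J (off (Suc n) j + off n i + k + m * (ht n + 1) * ht n)}"
proof -
  let ?N = "m * (ht n + 1) * ht n"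
  let ?g = "\<lambda>i. measure M (Lev (Suc (Suc n)) (off (Suc n) j + off n i + k + ?N) \<inter> (\<Union>k\<in>J. Lev n k))"
  let ?P = "\<lambda>i. target n J (off (Suc n) j + off n i + k + ?N)"
  have NH: "?N + 1 \<le> ht (Suc n)"
  proof -
    have "?N \<le> q n * ht n" using lq by (rule mult_le_mono1)
    moreover have "p n * ht n = 2 * (q n * ht n)" using p_2q[of n] by simp
    ultimately show ?thesis using ht_Suc[of n] q_pos[of n] by linarith
  qed
  have pb: "off (Suc n) j + off n i + k + ?N < ht (Suc (Suc n))" if i: "i < p n" for i
  proof -
    have "off n i + k < ht (Suc n)" using off_bound[OF i k] .
    moreover have "off (Suc n) j + ht (Suc n) \<le> off (Suc n) (Suc j)" using off_mono[of j "Suc j" "Suc n"] by simp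
    moreover have "off (Suc n) (Suc j) + (ht (Suc n) - 1) < ht (Suc (Suc n))"
      using off_bound[OF jj, of "ht (Suc n) - 1"] ht_pos[of "Suc n"] by simp
    ultimately show ?thesis using NH by linarith
  qed
  have "?g i = (if ?P i then \<beta> (Suc (Suc n)) else 0)" if "i < p n" for i
    using term_hit[OF J] term_miss[OF J _ pb[OF that]] by auto
  then have "(\<Sum>i<p n. ?g i) = (\<Sum>i<p n. if ?P i then \<beta> (Suc (Suc n)) else 0)" by simp
  also have "\<dots> = (\<Sum>i\<in>{i\<in>{..<p n}. ?P i}. \<beta> (Suc (Suc n)))" by (rule sum.inter_filter[symmetric]) simp
  also have "{i\<in>{..<p n}. ?P i} = {i. i < p n \<and> ?P i}" by auto
  finally show ?thesis by simp
qed

lemma col_last: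
  "0 \<le> (\<Sum>i<p n. measure M (Lev (Suc (Suc n)) (off (Suc n) j + off n i + k + N) \<inter> X))"
  "(\<Sum>i<p n. measure M (Lev (Suc (Suc n)) (off (Suc n) j + off n i + k + N) \<inter> X)) \<le> p n * \<beta> (Suc (Suc n))"
proof -
  show "0 \<le> (\<Sum>i<p n. measure M (Lev (Suc (Suc n)) (off (Suc n) j + off n i + k + N) \<inter> X))"
    by (simp add: sum_nonneg)
  have "(\<Sum>i<p n. measure M (Lev (Suc (Suc n)) (off (Suc n) j + off n i + k + N) \<inter> X)) \<le> (\<Sum>i<p n. \<beta> (Suc (Suc n)))"
    by (rule sum_mono) (rule term_le)
  then show "(\<Sum>i<p n. measure M (Lev (Suc (Suc n)) (off (Suc n) j + off n i + k + N) \<inter> X)) \<le> p n * \<beta> (Suc (Suc n))"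
    by simp
qed


lemma core_bound:
  fixes S0 \<mu> :: real
  assumes K: "K \<subseteq> {..<ht n}" and J: "J \<subseteq> {..<ht n}" and lq: "m * (ht n + 1) \<le> q n"
  defines "A \<equiv> (q n - m * (ht n + 1)) + (q n - m * ht n)"
  defines "S0 \<equiv> real (card (K \<inter> J) * A + card K * (2 * m * card J))"
  defines "\<mu> \<equiv> measure M ((T ^^ (m * (ht n + 1) * ht n)) ` (\<Union>k\<in>K. Lev n k) \<inter> (\<Union>k\<in>J. Lev n k))"
  shows "(p (Suc n) - 1) * \<beta> (Suc (Suc n)) * (S0 - card K) \<le> \<mu>"
    "\<mu> \<le> (p (Suc n) - 1) * \<beta> (Suc (Suc n)) * S0 + p n * \<beta> (Suc (Suc n)) * card K"
proof -
  let ?N = "m * (ht n + 1) * ht n"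
  let ?b = "\<beta> (Suc (Suc n))"
  let ?p' = "p (Suc n)"
  define G where "G k j = (\<Sum>i<p n. measure M (Lev (Suc (Suc n)) (off (Suc n) j + off n i + k + ?N) \<inter> (\<Union>k\<in>J. Lev n k)))" for k j
  define c0 where "c0 k = (if k \<in> J then A else 0) + 2 * m * card J" for k
  have mu: "\<mu> = (\<Sum>k\<in>K. \<Sum>j<?p'. G k j)" unfolding \<mu>_def G_def by (rule meas_decomp[OF K J])
  have b0: "?b \<ge> 0" by (rule \<beta>_nonneg)
  have p'S: "?p' = Suc (?p' - 1)" using p2[of "Suc n"] by simp
  have bounds: "(?p' - 1) * ?b * (real (c0 k) - 1) \<le> (\<Sum>j<?p'. G k j) \<and>
       (\<Sum>j<?p'. G k j) \<le> (?p' - 1) * ?b * real (c0 k) + p n * ?b" if k: "k \<in> K" for k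
  proof -
    have kh: "k < ht n" using k K by auto
    have split: "(\<Sum>j<?p'. G k j) = (\<Sum>j<?p' - 1. G k j) + G k (?p' - 1)"
      by (subst p'S) simp
    have cj: "real (c0 k) - 1 \<le> real (card {i. i < p n \<and> target n J (off (Suc n) j + off n i + k + ?N)}) \<and>
        real (card {i. i < p n \<and> target n J (off (Suc n) j + off n i + k + ?N)}) \<le> real (c0 k)"
      if j: "j < ?p' - 1" for j
    proof -
      have jj: "Suc j < ?p'" using j by simp
      have j': "j < ?p'" using j by simp
      have "card {i. i < p n \<and> target n J (off (Suc n) j + off n i + k + ?N)} \<le> c0 k"
        using count_col(1)[OF lq J j' kh jj] unfolding c0_def A_def by simp
      moreover have "c0 k \<le> card {i. i < p n \<and> target n J (off (Suc n) j + off n i + k + ?N)} + 1"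
        using count_col(2)[OF lq J j' kh jj] unfolding c0_def A_def by simp
      ultimately show ?thesis by linarith
    qed
    have Gj: "G k j = ?b * card {i. i < p n \<and> target n J (off (Suc n) j + off n i + k + ?N)}"
      if j: "j < ?p' - 1" for j
      unfolding G_def by (rule col_sum[OF J lq _ kh]) (use j in simp)
    have lo: "(\<Sum>j<?p' - 1. ?b * (real (c0 k) - 1)) \<le> (\<Sum>j<?p' - 1. G k j)"
      by (rule sum_mono) (use cj Gj b0 in \<open>auto intro: mult_left_mono\<close>)
    have hi: "(\<Sum>j<?p' - 1. G k j) \<le> (\<Sum>j<?p' - 1. ?b * real (c0 k))"
      by (rule sum_mono) (use cj Gj b0 in \<open>auto intro: mult_left_mono\<close>)
    have last: "0 \<le> G k (?p' - 1)" "G k (?p' - 1) \<le> p n * ?b"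
      unfolding G_def by (rule col_last)+
    show ?thesis using lo hi last split by (simp add: algebra_simps)
  qed
  have sc: "(\<Sum>k\<in>K. real (c0 k)) = S0"
  proof -
    have fK: "finite K" using K finite_subset by blast
    have "(\<Sum>k\<in>K. real (c0 k)) = (\<Sum>k\<in>K. (if k \<in> J then real A else 0)) + (\<Sum>k\<in>K. real (2 * m * card J))"
      unfolding c0_def by (simp add: sum.distrib if_distrib[where f=real] cong: if_cong)
    also have "(\<Sum>k\<in>K. (if k \<in> J then real A else 0)) = real (card (K \<inter> J)) * real A"
      using fK by (simp add: sum.If_cases Int_def)
    finally show ?thesis unfolding S0_def by simp
  qed
  have "(\<Sum>k\<in>K. (?p' - 1) * ?b * (real (c0 k) - 1)) \<le> \<mu>"
    unfolding mu by (rule sum_mono) (use bounds in blast)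
  moreover have "(\<Sum>k\<in>K. (?p' - 1) * ?b * (real (c0 k) - 1)) = (?p' - 1) * ?b * (S0 - card K)"
    using sc by (simp add: sum_distrib_left[symmetric] sum_subtractf)
  ultimately show "(?p' - 1) * ?b * (S0 - card K) \<le> \<mu>" by simp
  have "\<mu> \<le> (\<Sum>k\<in>K. (?p' - 1) * ?b * real (c0 k) + p n * ?b)"
    unfolding mu by (rule sum_mono) (use bounds in blast)
  moreover have "(\<Sum>k\<in>K. (?p' - 1) * ?b * real (c0 k) + p n * ?b) = (?p' - 1) * ?b * S0 + p n * ?b * card K"
    using sc by (simp add: sum.distrib sum_distrib_left[symmetric])
  ultimately show "\<mu> \<le> (?p' - 1) * ?b * S0 + p n * ?b * card K" by simp
qed

end

lemma real_core:
  fixes P P' H \<beta> L mm \<kappa> \<iota> jj \<mu> \<alpha> S0 :: real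
  assumes P: "P \<ge> 1" and P': "P' \<ge> 1" and H: "H \<ge> 1" and b: "\<beta> \<ge> 0" "H * \<beta> \<le> 1"
    and L: "L = mm * (H + 1)"
    and kh: "0 \<le> \<kappa>" "\<kappa> \<le> H" and ih: "0 \<le> \<iota>" "\<iota> \<le> H" and jh: "0 \<le> jj" "jj \<le> H"
    and S0: "S0 = \<iota> * (P - L - mm * H) + \<kappa> * (2 * mm * jj)"
    and lo: "(P' - 1) * (\<beta> / (P * P')) * (S0 - \<kappa>) \<le> \<mu>"
    and hi: "\<mu> \<le> (P' - 1) * (\<beta> / (P * P')) * S0 + P * (\<beta> / (P * P')) * \<kappa>"
  shows "\<bar>\<mu> - ((1 - \<alpha>) * \<beta> * \<iota> + \<alpha> * \<beta>\<^sup>2 * \<kappa> * jj)\<bar> \<le> 1 / P + 1 / P'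
     + \<bar>(P' - 1) / P' * (1 - L / P - (L / P) * (H / (H + 1))) - (1 - \<alpha>)\<bar>
     + \<bar>(P' - 1) / P' * (2 * (L / P) * (H / (H + 1))) - \<alpha> * (H * \<beta>)\<bar>"
proof -
  define a where "a = (P' - 1) / P' * (1 - L / P - (L / P) * (H / (H + 1))) - (1 - \<alpha>)"
  define bb where "bb = (P' - 1) / P' * (2 * (L / P) * (H / (H + 1))) - \<alpha> * (H * \<beta>)"
  define Y where "Y = (P' - 1) * (\<beta> / (P * P')) * S0"
  have bk: "\<beta> * \<kappa> \<le> 1" using mult_left_mono[OF kh(2) b(1)] b(2) by (simp add: mult.commute)
  have bi: "\<beta> * \<iota> \<le> 1" using mult_left_mono[OF ih(2) b(1)] b(2) by (simp add: mult.commute)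
  have e1: "(P' - 1) * (\<beta> / (P * P')) * \<kappa> \<le> 1 / P"
  proof -
    have "(P' - 1) * (\<beta> / (P * P')) * \<kappa> = ((P' - 1) / P') * (\<beta> * \<kappa>) / P" using P P' by (simp add: field_simps)
    also have "\<dots> \<le> 1 * 1 / P" using P P' bk b kh
      by (intro divide_right_mono mult_mono) (auto simp: field_simps)
    finally show ?thesis by simp
  qed
  have e2: "P * (\<beta> / (P * P')) * \<kappa> \<le> 1 / P'"
  proof -
    have "P * (\<beta> / (P * P')) * \<kappa> = (\<beta> * \<kappa>) / P'" using P P' by (simp add: field_simps)
    also have "\<dots> \<le> 1 / P'" using P' bk by (intro divide_right_mono) auto
    finally show ?thesis .
  qed
  have e0: "(P' - 1) * (\<beta> / (P * P')) * \<kappa> \<ge> 0" "P * (\<beta> / (P * P')) * \<kappa> \<ge> 0"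
    using P P' b kh by auto
  have lo': "(P' - 1) * (\<beta> / (P * P')) * (S0 - \<kappa>) = Y - (P' - 1) * (\<beta> / (P * P')) * \<kappa>"
    unfolding Y_def by (rule right_diff_distrib)
  have dY: "\<bar>\<mu> - Y\<bar> \<le> 1 / P + 1 / P'"
    using lo hi e1 e2 e0 unfolding lo' Y_def[symmetric] by linarith
  have l1: "L / P * (H / (H + 1)) = mm * H / P"
  proof -
    have "L / P * (H / (H + 1)) = (mm * H) * (H + 1) / (P * (H + 1))" unfolding L by (simp add: ac_simps)
    also have "\<dots> = mm * H / P" using H by (rule_tac mult_divide_mult_cancel_right) simp
    finally show ?thesis .
  qed
  have a1: "a + (1 - \<alpha>) = (P' - 1) / P' * (1 - L / P - mm * H / P)" unfolding a_def l1 by simp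
  have b1: "bb + \<alpha> * (H * \<beta>) = (P' - 1) / P' * (2 * (mm * H / P))" unfolding bb_def
    by (simp add: l1[symmetric] mult.assoc)
  have eqY: "Y = \<beta> * \<iota> * (a + (1 - \<alpha>)) + (\<beta> * \<kappa> * jj / H) * (bb + \<alpha> * (H * \<beta>))"
    unfolding Y_def a1 b1 S0 using P P' H by (simp add: field_simps)
  have "Y - ((1 - \<alpha>) * \<beta> * \<iota> + \<alpha> * \<beta>\<^sup>2 * \<kappa> * jj) = (\<beta> * \<iota>) * a + (\<beta> * \<kappa> * (jj / H)) * bb"
    unfolding eqY using H by (simp add: field_simps power2_eq_square)
  moreover have "\<bar>(\<beta> * \<iota>) * a\<bar> \<le> \<bar>a\<bar>"
    using bi b ih by (metis abs_mult abs_of_nonneg mult_left_le_one_le abs_ge_zero mult_nonneg_nonneg)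
  moreover have "\<bar>(\<beta> * \<kappa> * (jj / H)) * bb\<bar> \<le> \<bar>bb\<bar>"
  proof -
    have "jj / H \<le> 1" using jh H by simp
    then have "\<beta> * \<kappa> * (jj / H) \<le> 1" using bk b kh jh H
      by (smt (verit) divide_nonneg_nonneg mult_left_le_one_le mult_nonneg_nonneg)
    moreover have "\<beta> * \<kappa> * (jj / H) \<ge> 0" using b kh jh H by simp
    ultimately show ?thesis by (metis abs_mult abs_of_nonneg mult_left_le_one_le abs_ge_zero)
  qed
  ultimately have "\<bar>Y - ((1 - \<alpha>) * \<beta> * \<iota> + \<alpha> * \<beta>\<^sup>2 * \<kappa> * jj)\<bar> \<le> \<bar>a\<bar> + \<bar>bb\<bar>" by linarith
  then show ?thesis using dY unfolding a_def[symmetric] bb_def[symmetric] by linarith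
qed


locale r1m = r1h M T Tinv p s B C for M :: "'a measure" and T Tinv p s B C +
  fixes \<alpha> :: real and l :: "nat \<Rightarrow> int"
  assumes p_h: "filterlim (\<lambda>n. real (p n) / real (rk1_height p s n)) at_top sequentially"
    and \<alpha>_pos: "0 < \<alpha>" and \<alpha>_lt1: "\<alpha> < 1"
    and l_dvd: "\<forall>n. (int (rk1_height p s n) + 1) dvd l n"
    and l_asymp: "(\<lambda>n. real_of_int (l n) - \<alpha> * real (p n) / 2) \<in> o(\<lambda>n. real (p n))"
begin

lemma ht_ge_n: "ht n \<ge> n + 1"
proof (induction n)
  case (Suc n)
  then show ?case using ht_ge[of n] by simp
qed (simp)

lemma ht_lim: "filterlim (\<lambda>n. real (ht n)) at_top sequentially"
proof (rule filterlim_at_top_mono[OF filterlim_real_sequentially])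
  show "\<forall>\<^sub>F n in sequentially. real n \<le> real (ht n)" 
  proof (rule always_eventually, rule allI)
    fix n show "real n \<le> real (ht n)" using ht_ge_n[of n] by simp
  qed
qed

lemma p_lim: "filterlim (\<lambda>n. real (p n)) at_top sequentially"
proof (rule filterlim_at_top_mono[OF p_h])
  show "\<forall>\<^sub>F n in sequentially. real (p n) / real (ht n) \<le> real (p n)"
  proof (rule always_eventually, rule allI)
    fix n
    have "real (ht n) \<ge> 1" using ht_pos[of n] by simp
    then show "real (p n) / real (ht n) \<le> real (p n)" by (simp add: divide_le_eq) (simp add: mult_le_cancel_left1)
  qed
qed

lemma invp_lim: "(\<lambda>n. 1 / real (p n)) \<longlonglongrightarrow> 0"
  using tendsto_inverse_0_at_top[OF p_lim] by (simp add: inverse_eq_divide)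

lemma invp'_lim: "(\<lambda>n. 1 / real (p (Suc n))) \<longlonglongrightarrow> 0"
  using invp_lim by (rule LIMSEQ_Suc)

lemma x_lim: "(\<lambda>n. real_of_int (l n) / real (p n)) \<longlonglongrightarrow> \<alpha> / 2"
proof -
  have "(\<lambda>n. (real_of_int (l n) - \<alpha> * real (p n) / 2) / real (p n)) \<longlonglongrightarrow> 0"
    using smalloD_tendsto[OF l_asymp] .
  moreover have "(real_of_int (l n) - \<alpha> * real (p n) / 2) / real (p n) = real_of_int (l n) / real (p n) - \<alpha> / 2" for n
    using p2[of n] by (simp add: field_simps)
  ultimately have "(\<lambda>n. real_of_int (l n) / real (p n) - \<alpha> / 2) \<longlonglongrightarrow> 0" by simp
  then show ?thesis by (simp add: LIM_zero_iff)
qed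

lemma r_lim: "(\<lambda>n. real (ht n) / (real (ht n) + 1)) \<longlonglongrightarrow> 1"
proof -
  have f: "filterlim (\<lambda>n. real (ht n) + 1) at_top sequentially"
    by (rule filterlim_at_top_mono[OF ht_lim]) simp
  have "(\<lambda>n. 1 - 1 / (real (ht n) + 1)) \<longlonglongrightarrow> 1 - 0"
    using tendsto_inverse_0_at_top[OF f] by (intro tendsto_diff tendsto_const) (simp add: inverse_eq_divide)
  moreover have "1 - 1 / (real (ht n) + 1) = real (ht n) / (real (ht n) + 1)" for n
    by (simp add: field_simps)
  ultimately show ?thesis by simp
qed

lemma tower_lim: "(\<lambda>n. real (ht n) * \<beta> n) \<longlonglongrightarrow> 1"
proof (rule metric_LIMSEQ_I)
  fix r :: real assume r: "r > 0"
  obtain n0 F where F: "F \<subseteq> {..<ht n0}"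
    "measure M ((space M - (\<Union>k\<in>F. (T ^^ k) ` B n0)) \<union> ((\<Union>k\<in>F. (T ^^ k) ` B n0) - space M)) < r"
    using approx[OF sets.top r] by blast
  have U: "(\<Union>k\<in>F. (T ^^ k) ` B n0) = (\<Union>k\<in>F. Lev n0 k)" unfolding Lev_def ..
  have fF: "finite F" using F finite_subset by blast
  have Us: "(\<Union>k\<in>F. Lev n0 k) \<subseteq> space M" using Lev_space by blast
  have "(space M - (\<Union>k\<in>F. Lev n0 k)) \<union> ((\<Union>k\<in>F. Lev n0 k) - space M) = space M - (\<Union>k\<in>F. Lev n0 k)"
    using Us by blast
  then have "measure M (space M - (\<Union>k\<in>F. Lev n0 k)) < r" using F(2) unfolding U by simp
  then have "1 - measure M (\<Union>k\<in>F. Lev n0 k) < r" using prob_compl[OF UL_sets[OF fF]] by simp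
  moreover have "measure M (\<Union>k\<in>F. Lev n0 k) = card F * \<beta> n0" by (rule measure_UL[OF F(1)])
  moreover have "card F \<le> ht n0" using card_mono[OF _ F(1)] by simp
  ultimately have "1 - r < ht n0 * \<beta> n0" using \<beta>_nonneg[of n0]
    by (smt (verit) mult_right_mono of_nat_le_iff)
  have "\<forall>n\<ge>n0. dist (real (ht n) * \<beta> n) 1 < r"
  proof (intro allI impI)
    fix n assume "n0 \<le> n"
    then have "ht n0 * \<beta> n0 \<le> ht n * \<beta> n"
      using lift_Suc_mono_le[of "\<lambda>n. real (ht n) * \<beta> n", OF tower_mono] by blast
    then show "dist (real (ht n) * \<beta> n) 1 < r" using \<open>1 - r < ht n0 * \<beta> n0\<close> tower_le1[of n] r
      by (simp add: dist_real_def)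
  qed
  then show "\<exists>no. \<forall>n\<ge>no. dist (real (ht n) * \<beta> n) 1 < r" by blast
qed


definition "eps n = 1 / real (p n) + 1 / real (p (Suc n))
   + \<bar>(real (p (Suc n)) - 1) / real (p (Suc n)) * (1 - real_of_int (l n) / real (p n)
       - real_of_int (l n) / real (p n) * (real (ht n) / (real (ht n) + 1))) - (1 - \<alpha>)\<bar>
   + \<bar>(real (p (Suc n)) - 1) / real (p (Suc n)) * (2 * (real_of_int (l n) / real (p n))
       * (real (ht n) / (real (ht n) + 1))) - \<alpha> * (real (ht n) * \<beta> n)\<bar>"

lemma eps_lim: "eps \<longlonglongrightarrow> 0"
proof -
  have pp: "(\<lambda>n. (real (p (Suc n)) - 1) / real (p (Suc n))) \<longlonglongrightarrow> 1"
  proof -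
    have "(\<lambda>n. 1 - 1 / real (p (Suc n))) \<longlonglongrightarrow> 1 - 0" by (intro tendsto_intros invp'_lim)
    moreover have "1 - 1 / real (p (Suc n)) = (real (p (Suc n)) - 1) / real (p (Suc n))" for n
      using p2[of "Suc n"] by (simp add: field_simps)
    ultimately show ?thesis by simp
  qed
  have a: "(\<lambda>n. (real (p (Suc n)) - 1) / real (p (Suc n)) * (1 - real_of_int (l n) / real (p n)
       - real_of_int (l n) / real (p n) * (real (ht n) / (real (ht n) + 1))) - (1 - \<alpha>)) \<longlonglongrightarrow>
      1 * (1 - \<alpha> / 2 - \<alpha> / 2 * 1) - (1 - \<alpha>)"
    by (intro tendsto_intros pp x_lim r_lim)
  have b: "(\<lambda>n. (real (p (Suc n)) - 1) / real (p (Suc n)) * (2 * (real_of_int (l n) / real (p n))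
       * (real (ht n) / (real (ht n) + 1))) - \<alpha> * (real (ht n) * \<beta> n)) \<longlonglongrightarrow>
      1 * (2 * (\<alpha> / 2) * 1) - \<alpha> * 1"
    by (intro tendsto_intros pp x_lim r_lim tower_lim)
  have "eps \<longlonglongrightarrow> 0 + 0 + \<bar>1 * (1 - \<alpha> / 2 - \<alpha> / 2 * 1) - (1 - \<alpha>)\<bar> + \<bar>1 * (2 * (\<alpha> / 2) * 1) - \<alpha> * 1\<bar>"
    unfolding eps_def[abs_def] by (intro tendsto_intros invp_lim invp'_lim a b)
  then show ?thesis by simp
qed

lemma \<beta>_SS: "\<beta> (Suc (Suc n)) = \<beta> n / (real (p n) * real (p (Suc n)))"
  using \<beta>_Suc[of n] \<beta>_Suc[of "Suc n"] p2[of n] p2[of "Suc n"] by (simp add: field_simps)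

lemma stage_bound:
  assumes ln: "0 \<le> l n" and lq: "l n \<le> int (q n)" and K: "K \<subseteq> {..<ht n}" and J: "J \<subseteq> {..<ht n}"
  shows "\<bar>measure M ((T ^^ (nat (l n) * ht n)) ` (\<Union>k\<in>K. Lev n k) \<inter> (\<Union>k\<in>J. Lev n k))
     - ((1 - \<alpha>) * \<beta> n * card (K \<inter> J) + \<alpha> * (\<beta> n)\<^sup>2 * card K * card J)\<bar> \<le> eps n"
proof -
  obtain c where c: "l n = (int (ht n) + 1) * c" using l_dvd by (meson dvdE)
  have c0: "c \<ge> 0" using ln c by (simp add: zero_le_mult_iff)
  define m where "m = nat c"
  have li: "l n = int (m * (ht n + 1))" unfolding m_def using c c0 by (simp add: algebra_simps)
  then have lm: "nat (l n) = m * (ht n + 1)" by (simp only: nat_int)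
  have lq': "m * (ht n + 1) \<le> q n" using lq ln lm by linarith
  let ?A = "(q n - m * (ht n + 1)) + (q n - m * ht n)"
  let ?S0 = "real (card (K \<inter> J) * ?A + card K * (2 * m * card J))"
  let ?\<mu> = "measure M ((T ^^ (m * (ht n + 1) * ht n)) ` (\<Union>k\<in>K. Lev n k) \<inter> (\<Union>k\<in>J. Lev n k))"
  have cb: "(p (Suc n) - 1) * \<beta> (Suc (Suc n)) * (?S0 - card K) \<le> ?\<mu>"
     "?\<mu> \<le> (p (Suc n) - 1) * \<beta> (Suc (Suc n)) * ?S0 + p n * \<beta> (Suc (Suc n)) * card K"
    using core_bound[OF K J lq'] by simp_all
  have mh: "m * ht n \<le> q n" using lq' by (simp add: algebra_simps)
  have Lr: "real_of_int (l n) = real m * (real (ht n) + 1)"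
    using li by (simp add: algebra_simps)
  have Areal: "real ?A = real (p n) - real_of_int (l n) - real m * real (ht n)"
    using lq' mh p_2q[of n] unfolding Lr by (simp add: of_nat_diff algebra_simps)
  have p'r: "real (p (Suc n) - 1) = real (p (Suc n)) - 1" using p2[of "Suc n"] by simp
  have fK: "finite K" using K finite_subset by blast
  have "\<bar>?\<mu> - ((1 - \<alpha>) * \<beta> n * card (K \<inter> J) + \<alpha> * (\<beta> n)\<^sup>2 * card K * card J)\<bar> \<le> eps n"
    unfolding eps_def
  proof (rule real_core[where mm = "real m"])
    show "1 \<le> real (p n)" "1 \<le> real (p (Suc n))" using p2[of n] p2[of "Suc n"] by simp_all
    show "1 \<le> real (ht n)" using ht_pos[of n] by simp
    show "0 \<le> \<beta> n" "real (ht n) * \<beta> n \<le> 1" using \<beta>_nonneg tower_le1 by auto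
    show "real_of_int (l n) = real m * (real (ht n) + 1)" by (rule Lr)
    show "0 \<le> real (card K)" "real (card K) \<le> real (ht n)" using card_mono[OF _ K] by auto
    show "0 \<le> real (card (K \<inter> J))" "real (card (K \<inter> J)) \<le> real (ht n)"
      using card_mono[OF _ Int_lower1, of K J] card_mono[OF _ K] fK by auto
    show "0 \<le> real (card J)" "real (card J) \<le> real (ht n)" using card_mono[OF _ J] by auto
    show "?S0 = real (card (K \<inter> J)) * (real (p n) - real_of_int (l n) - real m * real (ht n))
        + real (card K) * (2 * real m * real (card J))"
      using Areal by simp
    show "(real (p (Suc n)) - 1) * (\<beta> n / (real (p n) * real (p (Suc n)))) * (?S0 - real (card K)) \<le> ?\<mu>"
      using cb(1) unfolding \<beta>_SS p'r by simp
    show "?\<mu> \<le> (real (p (Suc n)) - 1) * (\<beta> n / (real (p n) * real (p (Suc n)))) * ?S0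
        + real (p n) * (\<beta> n / (real (p n) * real (p (Suc n)))) * real (card K)"
      using cb(2) unfolding \<beta>_SS p'r by simp
  qed
  then show ?thesis using lm by (simp add: mult.assoc)
qed

end

definition "symd X Y = (X - Y) \<union> (Y - X)"

locale mpr = prob_space M for M :: "'a measure" +
  fixes R :: "nat \<Rightarrow> 'a \<Rightarrow> 'a" and \<alpha> :: real
  assumes R_meas: "\<And>n. R n \<in> measurable M M" and R_distr: "\<And>n. distr M M (R n) = M"
    and \<alpha>0: "0 \<le> \<alpha>" and \<alpha>1: "\<alpha> \<le> 1"
begin

definition "Q n E F = measure M ({x \<in> space M. R n x \<in> E} \<inter> F)"
definition "Tgt E F = (1 - \<alpha>) * measure M (E \<inter> F) + \<alpha> * measure M E * measure M F"

lemma pre_sets: "A \<in> sets M \<Longrightarrow> {x \<in> space M. R n x \<in> A} \<in> sets M"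
  using measurable_sets[OF R_meas] by (simp add: vimage_def Int_def conj_commute)

lemma pre_measure: "A \<in> sets M \<Longrightarrow> measure M {x \<in> space M. R n x \<in> A} = measure M A"
proof -
  assume A: "A \<in> sets M"
  have "measure M A = measure (distr M M (R n)) A" using R_distr by simp
  also have "\<dots> = measure M (R n -` A \<inter> space M)" by (rule measure_distr[OF R_meas A])
  also have "R n -` A \<inter> space M = {x \<in> space M. R n x \<in> A}" by auto
  finally show ?thesis by simp
qed

lemma meas_diff_le: "A \<in> sets M \<Longrightarrow> B \<in> sets M \<Longrightarrow> measure M A \<le> measure M B + measure M (A - B)"
proof -
  assume AB: "A \<in> sets M" "B \<in> sets M"
  have "measure M A \<le> measure M (B \<union> (A - B))" using AB by (intro finite_measure_mono) auto
  also have "\<dots> \<le> measure M B + measure M (A - B)" using AB by (intro measure_Un_le) auto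
  finally show ?thesis .
qed

lemma abs_meas_diff: "A \<in> sets M \<Longrightarrow> B \<in> sets M \<Longrightarrow> \<bar>measure M A - measure M B\<bar> \<le> measure M (symd A B)"
proof -
  assume AB: "A \<in> sets M" "B \<in> sets M"
  have "measure M (A - B) \<le> measure M (symd A B)" "measure M (B - A) \<le> measure M (symd A B)"
    unfolding symd_def using AB by (intro finite_measure_mono; auto)+
  then show ?thesis using meas_diff_le[OF AB] meas_diff_le[OF AB(2,1)] by linarith
qed

lemma symd_sets: "A \<in> sets M \<Longrightarrow> B \<in> sets M \<Longrightarrow> symd A B \<in> sets M"
  unfolding symd_def by auto

lemma Q_diff:
  assumes s: "E \<in> sets M" "E' \<in> sets M" "F \<in> sets M" "F' \<in> sets M"
  shows "\<bar>Q n E F - Q n E' F'\<bar> \<le> measure M (symd E E') + measure M (symd F F')"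
proof -
  let ?P = "{x \<in> space M. R n x \<in> E} \<inter> F"
  let ?P' = "{x \<in> space M. R n x \<in> E'} \<inter> F'"
  have Ps: "?P \<in> sets M" "?P' \<in> sets M" using pre_sets s by auto
  have "symd ?P ?P' \<subseteq> {x \<in> space M. R n x \<in> symd E E'} \<union> symd F F'"
    unfolding symd_def by auto
  then have "measure M (symd ?P ?P') \<le> measure M ({x \<in> space M. R n x \<in> symd E E'} \<union> symd F F')"
    using s by (intro finite_measure_mono) (auto intro!: pre_sets symd_sets)
  also have "\<dots> \<le> measure M {x \<in> space M. R n x \<in> symd E E'} + measure M (symd F F')"
    using s by (intro measure_Un_le) (auto intro!: pre_sets symd_sets)
  also have "measure M {x \<in> space M. R n x \<in> symd E E'} = measure M (symd E E')"
    using s by (intro pre_measure symd_sets) auto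
  finally show ?thesis using abs_meas_diff[OF Ps] unfolding Q_def by linarith
qed

lemma Tgt_diff:
  assumes s: "E \<in> sets M" "E' \<in> sets M" "F \<in> sets M" "F' \<in> sets M"
  shows "\<bar>Tgt E F - Tgt E' F'\<bar> \<le> measure M (symd E E') + measure M (symd F F')"
proof -
  let ?a = "measure M (symd E E')" and ?b = "measure M (symd F F')"
  have i: "\<bar>measure M (E \<inter> F) - measure M (E' \<inter> F')\<bar> \<le> ?a + ?b"
  proof -
    have "symd (E \<inter> F) (E' \<inter> F') \<subseteq> symd E E' \<union> symd F F'" unfolding symd_def by auto
    then have "measure M (symd (E \<inter> F) (E' \<inter> F')) \<le> measure M (symd E E' \<union> symd F F')"
      using s by (intro finite_measure_mono) (auto intro!: symd_sets)
    also have "\<dots> \<le> ?a + ?b" using s by (intro measure_Un_le) (auto intro!: symd_sets)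
    finally show ?thesis using abs_meas_diff[of "E \<inter> F" "E' \<inter> F'"] s by auto
  qed
  have e: "\<bar>measure M E - measure M E'\<bar> \<le> ?a" and f: "\<bar>measure M F - measure M F'\<bar> \<le> ?b"
    using abs_meas_diff s by auto
  have "\<bar>measure M E * measure M F - measure M E' * measure M F'\<bar>
      = \<bar>(measure M E - measure M E') * measure M F + measure M E' * (measure M F - measure M F')\<bar>"
    by (simp add: algebra_simps)
  also have "\<dots> \<le> \<bar>measure M E - measure M E'\<bar> * measure M F + measure M E' * \<bar>measure M F - measure M F'\<bar>"
    by (simp add: abs_mult abs_triangle_ineq[THEN order_trans])
  also have "\<dots> \<le> ?a * 1 + 1 * ?b"
    using e f by (intro add_mono mult_mono) auto
  finally have p: "\<bar>measure M E * measure M F - measure M E' * measure M F'\<bar> \<le> ?a + ?b" by simp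
  have "\<bar>Tgt E F - Tgt E' F'\<bar> = \<bar>(1 - \<alpha>) * (measure M (E \<inter> F) - measure M (E' \<inter> F'))
       + \<alpha> * (measure M E * measure M F - measure M E' * measure M F')\<bar>"
    unfolding Tgt_def by (simp add: algebra_simps)
  also have "\<dots> \<le> \<bar>(1 - \<alpha>) * (measure M (E \<inter> F) - measure M (E' \<inter> F'))\<bar>
       + \<bar>\<alpha> * (measure M E * measure M F - measure M E' * measure M F')\<bar>"
    by (rule abs_triangle_ineq)
  also have "\<dots> = (1 - \<alpha>) * \<bar>measure M (E \<inter> F) - measure M (E' \<inter> F')\<bar>
       + \<alpha> * \<bar>measure M E * measure M F - measure M E' * measure M F'\<bar>"
    using \<alpha>0 \<alpha>1 by (simp add: abs_mult)
  also have "\<dots> \<le> (1 - \<alpha>) * (?a + ?b) + \<alpha> * (?a + ?b)"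
    using \<alpha>0 \<alpha>1 i p by (intro add_mono mult_left_mono) auto
  finally show ?thesis by (simp add: algebra_simps)
qed

lemma approx_lim:
  assumes s: "E \<in> sets M" "F \<in> sets M"
    and ap: "\<And>e. e > 0 \<Longrightarrow> \<exists>E' F'. E' \<in> sets M \<and> F' \<in> sets M \<and> measure M (symd E E') < e
        \<and> measure M (symd F F') < e \<and> (\<lambda>n. Q n E' F') \<longlonglongrightarrow> Tgt E' F'"
  shows "(\<lambda>n. Q n E F) \<longlonglongrightarrow> Tgt E F"
proof (rule metric_LIMSEQ_I)
  fix r :: real assume r: "r > 0"
  obtain E' F' where E'F': "E' \<in> sets M" "F' \<in> sets M" "measure M (symd E E') < r / 5"
    "measure M (symd F F') < r / 5" "(\<lambda>n. Q n E' F') \<longlonglongrightarrow> Tgt E' F'"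
    using ap[of "r / 5"] r by auto
  obtain n0 where n0: "\<forall>n\<ge>n0. dist (Q n E' F') (Tgt E' F') < r / 5"
    using metric_LIMSEQ_D[OF E'F'(5), of "r / 5"] r by auto
  have "\<forall>n\<ge>n0. dist (Q n E F) (Tgt E F) < r"
  proof (intro allI impI)
    fix n assume "n \<ge> n0"
    then have a: "\<bar>Q n E' F' - Tgt E' F'\<bar> < r / 5" using n0 by (simp add: dist_real_def)
    have b: "\<bar>Q n E F - Q n E' F'\<bar> < 2 * r / 5" using Q_diff[OF s(1) E'F'(1) s(2) E'F'(2), of n] E'F' by linarith
    have c: "\<bar>Tgt E F - Tgt E' F'\<bar> < 2 * r / 5" using Tgt_diff[OF s(1) E'F'(1) s(2) E'F'(2)] E'F' by linarith
    show "dist (Q n E F) (Tgt E F) < r" using a b c unfolding dist_real_def by arith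
  qed
  then show "\<exists>no. \<forall>n\<ge>no. dist (Q n E F) (Tgt E F) < r" by blast
qed

end

lemma amgm: "(t::real) > 0 \<Longrightarrow> a * b \<le> (t * a\<^sup>2 + b\<^sup>2 / t) / 2"
proof -
  assume t: "t > 0"
  have "0 \<le> (t * a - b)\<^sup>2 / t" using t by simp
  also have "(t * a - b)\<^sup>2 / t = t * a\<^sup>2 - 2 * a * b + b\<^sup>2 / t"
    using t by (simp add: power2_eq_square field_simps)
  finally show ?thesis by simp
qed

lemma cnj_meas[measurable]: "v \<in> borel_measurable M \<Longrightarrow> (\<lambda>x. cnj (v x)) \<in> borel_measurable M"
  by (rule borel_measurable_continuous_on[OF continuous_on_cnj[OF continuous_on_id]])

lemma cnj_indicator[simp]: "cnj (indicator X x :: complex) = indicator X x"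
  by (simp add: indicator_def)

definition "ip M S u v = (\<integral>x. u (S x) * cnj (v x) \<partial>M)"

context prob_space
begin

definition "mp S \<longleftrightarrow> S \<in> measurable M M \<and> distr M M S = M"

lemma mp_id: "mp (\<lambda>x. x)"
  unfolding mp_def using distr_id2[of M] by (simp add: id_def)

lemma sq_comp:
  assumes S: "mp S" and u: "square_integrable M u"
  shows "square_integrable M (\<lambda>x. u (S x))"
    "(\<integral>x. (norm (u (S x)))\<^sup>2 \<partial>M) = (\<integral>x. (norm (u x))\<^sup>2 \<partial>M)"
proof -
  have Sm: "S \<in> measurable M M" and Sd: "distr M M S = M" using S unfolding mp_def by auto
  have ub: "u \<in> borel_measurable M" and ui: "integrable M (\<lambda>x. (norm (u x))\<^sup>2)"
    using u unfolding square_integrable_def by auto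
  have nb: "(\<lambda>x. (norm (u x))\<^sup>2) \<in> borel_measurable M" using ub by measurable
  have "integrable (distr M M S) (\<lambda>x. (norm (u x))\<^sup>2)" using ui Sd by simp
  then have "integrable M (\<lambda>x. (norm (u (S x)))\<^sup>2)" using integrable_distr_eq[OF Sm nb] by simp
  moreover have "(\<lambda>x. u (S x)) \<in> borel_measurable M" using measurable_compose[OF Sm ub] by (simp add: comp_def)
  ultimately show "square_integrable M (\<lambda>x. u (S x))" unfolding square_integrable_def by simp
  have "(\<integral>x. (norm (u x))\<^sup>2 \<partial>M) = (\<integral>x. (norm (u x))\<^sup>2 \<partial>(distr M M S))" using Sd by simp
  also have "\<dots> = (\<integral>x. (norm (u (S x)))\<^sup>2 \<partial>M)" by (rule integral_distr[OF Sm nb])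
  finally show "(\<integral>x. (norm (u (S x)))\<^sup>2 \<partial>M) = (\<integral>x. (norm (u x))\<^sup>2 \<partial>M)" by simp
qed

lemma IB:
  assumes S: "mp S" and u: "square_integrable M u" and v: "square_integrable M v" and t: "t > 0"
  shows "integrable M (\<lambda>x. u (S x) * cnj (v x))"
    "norm (ip M S u v) \<le> (t * (\<integral>x. (norm (u x))\<^sup>2 \<partial>M) + (\<integral>x. (norm (v x))\<^sup>2 \<partial>M) / t) / 2"
proof -
  have uS: "square_integrable M (\<lambda>x. u (S x))" and eq: "(\<integral>x. (norm (u (S x)))\<^sup>2 \<partial>M) = (\<integral>x. (norm (u x))\<^sup>2 \<partial>M)"
    using sq_comp[OF S u] by auto
  have uSb: "(\<lambda>x. u (S x)) \<in> borel_measurable M" and uSi: "integrable M (\<lambda>x. (norm (u (S x)))\<^sup>2)"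
    using uS unfolding square_integrable_def by auto
  have vb: "v \<in> borel_measurable M" and vi: "integrable M (\<lambda>x. (norm (v x))\<^sup>2)"
    using v unfolding square_integrable_def by auto
  define w where "w x = (t * (norm (u (S x)))\<^sup>2 + (norm (v x))\<^sup>2 / t) / 2" for x
  have wi: "integrable M w" unfolding w_def using uSi vi by auto
  have pt: "norm (u (S x) * cnj (v x)) \<le> w x" for x
    unfolding w_def using amgm[OF t, of "norm (u (S x))" "norm (v x)"] by (simp add: norm_mult)
  have w0: "w x \<ge> 0" for x unfolding w_def using t by simp
  have mb: "(\<lambda>x. u (S x) * cnj (v x)) \<in> borel_measurable M" using uSb vb by measurable
  show ii: "integrable M (\<lambda>x. u (S x) * cnj (v x))"
    by (rule Bochner_Integration.integrable_bound[OF wi mb]) (use pt w0 in auto)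
  have "norm (ip M S u v) \<le> (\<integral>x. norm (u (S x) * cnj (v x)) \<partial>M)" unfolding ip_def by (rule integral_norm_bound)
  also have "\<dots> \<le> (\<integral>x. w x \<partial>M)" by (rule integral_mono) (use ii wi pt in auto)
  also have "(\<integral>x. w x \<partial>M) = (t * (\<integral>x. (norm (u (S x)))\<^sup>2 \<partial>M) + (\<integral>x. (norm (v x))\<^sup>2 \<partial>M) / t) / 2"
    unfolding w_def using uSi vi by simp
  finally show "norm (ip M S u v) \<le> (t * (\<integral>x. (norm (u x))\<^sup>2 \<partial>M) + (\<integral>x. (norm (v x))\<^sup>2 \<partial>M) / t) / 2"
    unfolding eq .
qed

lemma sq_diff: "square_integrable M u \<Longrightarrow> square_integrable M v \<Longrightarrow> square_integrable M (\<lambda>x. u x - v x)"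
proof -
  assume u: "square_integrable M u" and v: "square_integrable M v"
  have ub: "u \<in> borel_measurable M" and ui: "integrable M (\<lambda>x. (norm (u x))\<^sup>2)"
    using u unfolding square_integrable_def by auto
  have vb: "v \<in> borel_measurable M" and vi: "integrable M (\<lambda>x. (norm (v x))\<^sup>2)"
    using v unfolding square_integrable_def by auto
  have b: "(\<lambda>x. u x - v x) \<in> borel_measurable M" using ub vb by measurable
  have i2: "integrable M (\<lambda>x. 2 * (norm (u x))\<^sup>2 + 2 * (norm (v x))\<^sup>2)" using ui vi by auto
  have b2: "(\<lambda>x. (norm (u x - v x))\<^sup>2) \<in> borel_measurable M" using b by measurable
  have pw: "norm ((norm (u x - v x))\<^sup>2) \<le> norm (2 * (norm (u x))\<^sup>2 + 2 * (norm (v x))\<^sup>2)" for x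
  proof -
    have "norm (u x - v x) \<le> norm (u x) + norm (v x)" by (rule norm_triangle_ineq4)
    then have "(norm (u x - v x))\<^sup>2 \<le> (norm (u x) + norm (v x))\<^sup>2" by (simp add: power_mono)
    also have "\<dots> \<le> 2 * (norm (u x))\<^sup>2 + 2 * (norm (v x))\<^sup>2"
    proof -
      have "2 * (norm (u x))\<^sup>2 + 2 * (norm (v x))\<^sup>2 - (norm (u x) + norm (v x))\<^sup>2 = (norm (u x) - norm (v x))\<^sup>2"
        by (simp add: power2_eq_square algebra_simps)
      then show ?thesis by (smt (verit) zero_le_power2)
    qed
    finally show ?thesis by simp
  qed
  have "integrable M (\<lambda>x. (norm (u x - v x))\<^sup>2)"
    by (rule Bochner_Integration.integrable_bound[OF i2 b2]) (use pw in auto)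
  then show ?thesis unfolding square_integrable_def using b by simp
qed

lemma sq_const: "square_integrable M (\<lambda>x. c)"
  unfolding square_integrable_def by simp

lemma ip_split:
  assumes S: "mp S" and f: "square_integrable M f" "square_integrable M f'"
    and g: "square_integrable M g" "square_integrable M g'"
  shows "ip M S f g - ip M S f' g' = ip M S (\<lambda>x. f x - f' x) g + ip M S f' (\<lambda>x. g x - g' x)"
proof -
  have d1: "square_integrable M (\<lambda>x. f x - f' x)" and d2: "square_integrable M (\<lambda>x. g x - g' x)"
    using sq_diff f g by auto
  have i1: "integrable M (\<lambda>x. f (S x) * cnj (g x))" "integrable M (\<lambda>x. f' (S x) * cnj (g' x))"
    "integrable M (\<lambda>x. (f (S x) - f' (S x)) * cnj (g x))" "integrable M (\<lambda>x. f' (S x) * cnj (g x - g' x))"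
    using IB(1)[OF S f(1) g(1), of 1] IB(1)[OF S f(2) g(2), of 1] IB(1)[OF S d1 g(1), of 1] IB(1)[OF S f(2) d2, of 1]
    by auto
  have "ip M S f g - ip M S f' g' = (\<integral>x. f (S x) * cnj (g x) - f' (S x) * cnj (g' x) \<partial>M)"
    unfolding ip_def using i1 by simp
  also have "\<dots> = (\<integral>x. (f (S x) - f' (S x)) * cnj (g x) + f' (S x) * cnj (g x - g' x) \<partial>M)"
    by (rule Bochner_Integration.integral_cong) (auto simp: algebra_simps)
  also have "\<dots> = ip M S (\<lambda>x. f x - f' x) g + ip M S f' (\<lambda>x. g x - g' x)"
    unfolding ip_def using i1 by simp
  finally show ?thesis .
qed


abbreviation "N2 u \<equiv> (\<integral>x. (norm (u x))\<^sup>2 \<partial>M)"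

lemma N2_nonneg: "N2 u \<ge> 0" by simp

lemma ip_close:
  assumes S: "mp S" and f: "square_integrable M f" "square_integrable M f'"
    and g: "square_integrable M g" "square_integrable M g'"
    and e: "\<epsilon> > 0" and C: "C \<ge> 1" and gC: "N2 g \<le> C" and fC: "N2 f' \<le> C"
    and df: "N2 (\<lambda>x. f x - f' x) \<le> \<epsilon>\<^sup>2 / (4 * C)" and dg: "N2 (\<lambda>x. g x - g' x) \<le> \<epsilon>\<^sup>2 / (4 * C)"
  shows "norm (ip M S f g - ip M S f' g') \<le> \<epsilon>"
proof -
  have d1: "square_integrable M (\<lambda>x. f x - f' x)" and d2: "square_integrable M (\<lambda>x. g x - g' x)"
    using sq_diff f g by auto
  have Cp: "C > 0" using C by simp
  have t1: "2 * C / \<epsilon> > 0" using Cp e by simp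
  have t2: "\<epsilon> / (2 * C) > 0" using Cp e by simp
  have b1: "norm (ip M S (\<lambda>x. f x - f' x) g) \<le> \<epsilon> / 2"
  proof -
    have "norm (ip M S (\<lambda>x. f x - f' x) g) \<le> (2 * C / \<epsilon> * N2 (\<lambda>x. f x - f' x) + N2 g / (2 * C / \<epsilon>)) / 2"
      by (rule IB(2)[OF S d1 g(1) t1])
    also have "\<dots> \<le> (2 * C / \<epsilon> * (\<epsilon>\<^sup>2 / (4 * C)) + C / (2 * C / \<epsilon>)) / 2"
      using df gC t1 by (intro divide_right_mono add_mono mult_left_mono) auto
    also have "\<dots> = \<epsilon> / 2" using Cp e by (simp add: field_simps power2_eq_square)
    finally show ?thesis .
  qed
  have b2: "norm (ip M S f' (\<lambda>x. g x - g' x)) \<le> \<epsilon> / 2"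
  proof -
    have "norm (ip M S f' (\<lambda>x. g x - g' x)) \<le> (\<epsilon> / (2 * C) * N2 f' + N2 (\<lambda>x. g x - g' x) / (\<epsilon> / (2 * C))) / 2"
      by (rule IB(2)[OF S f(2) d2 t2])
    also have "\<dots> \<le> (\<epsilon> / (2 * C) * C + (\<epsilon>\<^sup>2 / (4 * C)) / (\<epsilon> / (2 * C))) / 2"
      using dg fC t2 by (intro divide_right_mono add_mono mult_left_mono) auto
    also have "\<dots> = \<epsilon> / 2" using Cp e by (simp add: field_simps power2_eq_square)
    finally show ?thesis .
  qed
  show ?thesis unfolding ip_split[OF S f g] using b1 b2 norm_triangle_ineq[of "ip M S (\<lambda>x. f x - f' x) g" "ip M S f' (\<lambda>x. g x - g' x)"]
    by linarith
qed

lemma int_ip: "(\<integral>x. f x \<partial>M) = ip M (\<lambda>x. x) f (\<lambda>x. 1)" unfolding ip_def by simp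

lemma int_bound: "square_integrable M f \<Longrightarrow> norm (\<integral>x. f x \<partial>M) \<le> (N2 f + 1) / 2"
  using IB(2)[OF mp_id _ sq_const, of f 1 1] prob_space unfolding int_ip by simp

lemma int_close:
  assumes f: "square_integrable M f" "square_integrable M f'" and e: "\<eta> > 0"
    and df: "N2 (\<lambda>x. f x - f' x) \<le> \<eta>\<^sup>2"
  shows "norm ((\<integral>x. f x \<partial>M) - (\<integral>x. f' x \<partial>M)) \<le> \<eta>"
proof -
  have "(\<integral>x. f x \<partial>M) - (\<integral>x. f' x \<partial>M) = ip M (\<lambda>x. x) (\<lambda>x. f x - f' x) (\<lambda>x. 1) + ip M (\<lambda>x. x) f' (\<lambda>x. 1 - 1)"
    unfolding int_ip by (rule ip_split[OF mp_id f sq_const sq_const])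
  also have "ip M (\<lambda>x. x) f' (\<lambda>x. 1 - 1) = 0" unfolding ip_def by simp
  finally have eq: "(\<integral>x. f x \<partial>M) - (\<integral>x. f' x \<partial>M) = ip M (\<lambda>x. x) (\<lambda>x. f x - f' x) (\<lambda>x. 1)" by simp
  have "norm (ip M (\<lambda>x. x) (\<lambda>x. f x - f' x) (\<lambda>x. 1)) \<le> (1 / \<eta> * N2 (\<lambda>x. f x - f' x) + N2 (\<lambda>x. 1::complex) / (1 / \<eta>)) / 2"
    by (rule IB(2)[OF mp_id sq_diff[OF f] sq_const]) (use e in simp)
  also have "\<dots> \<le> (1 / \<eta> * \<eta>\<^sup>2 + 1 / (1 / \<eta>)) / 2"
    using df e by (intro divide_right_mono add_mono mult_left_mono) auto
  also have "\<dots> = \<eta>" using e by (simp add: field_simps power2_eq_square)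
  finally show ?thesis unfolding eq .
qed

lemma cplx_ind_int: "X \<in> sets M \<Longrightarrow> integrable M (\<lambda>x. indicator X x :: complex)"
proof -
  assume X: "X \<in> sets M"
  have "integrable M (\<lambda>x. indicator X x :: real)"
    by (rule integrable_real_indicator[OF X]) (simp add: less_top[symmetric])
  then have "integrable M (\<lambda>x. of_real (indicator X x) :: complex)" by (rule integrable_of_real)
  then show ?thesis by (simp add: of_real_indicator)
qed

lemma cplx_ind_integral: "X \<in> sets M \<Longrightarrow> (\<integral>x. indicator X x \<partial>M) = complex_of_real (measure M X)"
proof -
  assume X: "X \<in> sets M"
  have "(\<integral>x. indicator X x \<partial>M) = (\<integral>x. complex_of_real (indicator X x) \<partial>M)" by (simp add: of_real_indicator)
  also have "\<dots> = complex_of_real (\<integral>x. indicator X x \<partial>M)" by (rule integral_complex_of_real)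
  also have "(\<integral>x. indicator X x \<partial>M) = measure M X" using X sets.sets_into_space[OF X]
    by (simp add: Int_absorb2)
  finally show ?thesis .
qed

lemma expand:
  assumes S: "S \<in> measurable M M" and fin: "finite I" "finite J"
    and A: "\<And>i. i \<in> I \<Longrightarrow> A i \<in> sets M" and Bs: "\<And>j. j \<in> J \<Longrightarrow> B j \<in> sets M"
    and f: "\<And>x. x \<in> space M \<Longrightarrow> f x = (\<Sum>i\<in>I. c i * indicator (A i) x)"
    and g: "\<And>x. x \<in> space M \<Longrightarrow> g x = (\<Sum>j\<in>J. d j * indicator (B j) x)"
  shows "ip M S f g = (\<Sum>i\<in>I. \<Sum>j\<in>J. c i * cnj (d j) * complex_of_real (measure M ({x \<in> space M. S x \<in> A i} \<inter> B j)))"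
proof -
  let ?X = "\<lambda>i j. {x \<in> space M. S x \<in> A i} \<inter> B j"
  have Xs: "i \<in> I \<Longrightarrow> j \<in> J \<Longrightarrow> ?X i j \<in> sets M" for i j
    using measurable_sets[OF S A] Bs by (auto simp: vimage_def Int_def conj_commute)
  have pt: "f (S x) * cnj (g x) = (\<Sum>i\<in>I. \<Sum>j\<in>J. c i * cnj (d j) * indicator (?X i j) x)"
    if x: "x \<in> space M" for x
  proof -
    have Sx: "S x \<in> space M" using measurable_space[OF S x] .
    have "f (S x) * cnj (g x) = (\<Sum>i\<in>I. c i * indicator (A i) (S x)) * (\<Sum>j\<in>J. cnj (d j) * indicator (B j) x)"
      using f[OF Sx] g[OF x] by simp
    also have "\<dots> = (\<Sum>i\<in>I. \<Sum>j\<in>J. (c i * indicator (A i) (S x)) * (cnj (d j) * indicator (B j) x))"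
      by (rule sum_product)
    also have "\<dots> = (\<Sum>i\<in>I. \<Sum>j\<in>J. c i * cnj (d j) * indicator (?X i j) x)"
      using x by (intro sum.cong refl) (auto simp: indicator_def)
    finally show ?thesis .
  qed
  have "ip M S f g = (\<integral>x. (\<Sum>i\<in>I. \<Sum>j\<in>J. c i * cnj (d j) * indicator (?X i j) x) \<partial>M)"
    unfolding ip_def by (rule Bochner_Integration.integral_cong) (use pt in auto)
  also have "\<dots> = (\<Sum>i\<in>I. \<integral>x. (\<Sum>j\<in>J. c i * cnj (d j) * indicator (?X i j) x) \<partial>M)"
    by (rule Bochner_Integration.integral_sum)
      (auto intro!: Bochner_Integration.integrable_sum integrable_mult_right cplx_ind_int Xs)
  also have "\<dots> = (\<Sum>i\<in>I. \<Sum>j\<in>J. \<integral>x. c i * cnj (d j) * indicator (?X i j) x \<partial>M)"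
    by (intro sum.cong refl Bochner_Integration.integral_sum) (auto intro!: integrable_mult_right cplx_ind_int Xs)
  also have "\<dots> = (\<Sum>i\<in>I. \<Sum>j\<in>J. c i * cnj (d j) * complex_of_real (measure M (?X i j)))"
    by (intro sum.cong refl) (simp add: cplx_ind_integral Xs)
  finally show ?thesis .
qed

end


context prob_space
begin

lemma int_expand:
  assumes fin: "finite I" and A: "\<And>i. i \<in> I \<Longrightarrow> A i \<in> sets M"
    and f: "\<And>x. x \<in> space M \<Longrightarrow> f x = (\<Sum>i\<in>I. c i * indicator (A i) x)"
  shows "(\<integral>x. f x \<partial>M) = (\<Sum>i\<in>I. c i * complex_of_real (measure M (A i)))"
proof -
  have "(\<integral>x. f x \<partial>M) = ip M (\<lambda>x. x) f (\<lambda>x. 1)" by (rule int_ip)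
  also have "\<dots> = (\<Sum>i\<in>I. \<Sum>j\<in>{0::nat}. c i * cnj 1 * complex_of_real (measure M ({x \<in> space M. x \<in> A i} \<inter> space M)))"
    by (rule expand[where B="\<lambda>_. space M" and d="\<lambda>_. 1"]) (use fin A f in auto)
  also have "\<dots> = (\<Sum>i\<in>I. c i * complex_of_real (measure M (A i)))"
  proof (intro sum.cong refl)
    fix i assume "i \<in> I"
    then have "{x \<in> space M. x \<in> A i} \<inter> space M = A i" using A sets.sets_into_space by blast
    then show "(\<Sum>j\<in>{0::nat}. c i * cnj 1 * complex_of_real (measure M ({x \<in> space M. x \<in> A i} \<inter> space M))) =
       c i * complex_of_real (measure M (A i))" by simp
  qed
  finally show ?thesis .
qed

lemma approx_seq:
  assumes f: "square_integrable M f"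
  shows "\<exists>F. (\<forall>i. simple_function M (F i)) \<and> (\<forall>i. \<forall>x\<in>space M. norm (F i x) \<le> 2 * norm (f x))
    \<and> (\<lambda>i. N2 (\<lambda>x. f x - F i x)) \<longlonglongrightarrow> 0"
proof -
  have fb: "f \<in> borel_measurable M" and fi: "integrable M (\<lambda>x. (norm (f x))\<^sup>2)"
    using f unfolding square_integrable_def by auto
  obtain F where F: "\<And>i. simple_function M (F i)" "\<And>x. x \<in> space M \<Longrightarrow> (\<lambda>i. F i x) \<longlonglongrightarrow> f x"
    "\<And>i x. x \<in> space M \<Longrightarrow> dist (F i x) 0 \<le> 2 * dist (f x) 0"
    using borel_measurable_implies_sequence_metric[OF fb, of 0] by blast
  have Fb: "F i \<in> borel_measurable M" for i using F(1) by (rule borel_measurable_simple_function)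
  have bnd: "norm (F i x) \<le> 2 * norm (f x)" if "x \<in> space M" for i x using F(3)[OF that] by simp
  have "(\<lambda>i. \<integral>x. (norm (f x - F i x))\<^sup>2 \<partial>M) \<longlonglongrightarrow> (\<integral>x. 0 \<partial>M)"
  proof (rule integral_dominated_convergence[where w="\<lambda>x. 9 * (norm (f x))\<^sup>2"])
    show "(\<lambda>x. 0::real) \<in> borel_measurable M" by simp
    show "(\<lambda>x. (norm (f x - F i x))\<^sup>2) \<in> borel_measurable M" for i using fb Fb[of i] by measurable
    show "integrable M (\<lambda>x. 9 * (norm (f x))\<^sup>2)" using fi by simp
    show "AE x in M. (\<lambda>i. (norm (f x - F i x))\<^sup>2) \<longlonglongrightarrow> 0"
    proof (rule AE_I2)
      fix x assume x: "x \<in> space M"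
      have "(\<lambda>i. f x - F i x) \<longlonglongrightarrow> f x - f x" by (rule tendsto_diff[OF tendsto_const F(2)[OF x]])
      then have "(\<lambda>i. (norm (f x - F i x))\<^sup>2) \<longlonglongrightarrow> (norm (f x - f x))\<^sup>2" by (rule tendsto_power[OF tendsto_norm])
      then show "(\<lambda>i. (norm (f x - F i x))\<^sup>2) \<longlonglongrightarrow> 0" by simp
    qed
    show "AE x in M. norm ((norm (f x - F i x))\<^sup>2) \<le> 9 * (norm (f x))\<^sup>2" for i
    proof (rule AE_I2)
      fix x assume x: "x \<in> space M"
      have "norm (f x - F i x) \<le> norm (f x) + norm (F i x)" by (rule norm_triangle_ineq4)
      also have "\<dots> \<le> 3 * norm (f x)" using bnd[OF x] by simp
      finally have "(norm (f x - F i x))\<^sup>2 \<le> (3 * norm (f x))\<^sup>2" by (rule power_mono) simp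
      then show "norm ((norm (f x - F i x))\<^sup>2) \<le> 9 * (norm (f x))\<^sup>2" by (simp add: power_mult_distrib)
    qed
  qed
  then show ?thesis using F(1) bnd by auto
qed

lemma simple_sq: "simple_function M g \<Longrightarrow> square_integrable M f \<Longrightarrow> (\<forall>x\<in>space M. norm (g x) \<le> 2 * norm (f x))
   \<Longrightarrow> square_integrable M g \<and> N2 g \<le> 4 * N2 f"
proof -
  assume g: "simple_function M g" and f: "square_integrable M f" and b: "\<forall>x\<in>space M. norm (g x) \<le> 2 * norm (f x)"
  have gb: "g \<in> borel_measurable M" using g by (rule borel_measurable_simple_function)
  have fi: "integrable M (\<lambda>x. (norm (f x))\<^sup>2)" using f unfolding square_integrable_def by auto
  have pw: "x \<in> space M \<Longrightarrow> (norm (g x))\<^sup>2 \<le> 4 * (norm (f x))\<^sup>2" for x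
  proof -
    assume x: "x \<in> space M"
    have "(norm (g x))\<^sup>2 \<le> (2 * norm (f x))\<^sup>2" using b x by (intro power_mono) auto
    then show ?thesis by (simp add: power_mult_distrib)
  qed
  have gi: "integrable M (\<lambda>x. (norm (g x))\<^sup>2)"
    by (rule Bochner_Integration.integrable_bound[where f="\<lambda>x. 4 * (norm (f x))\<^sup>2"]) (use fi gb pw in auto)
  have "N2 g \<le> (\<integral>x. 4 * (norm (f x))\<^sup>2 \<partial>M)" by (rule integral_mono) (use gi fi pw in auto)
  then show ?thesis unfolding square_integrable_def using gb gi by simp
qed

lemma simple_rep:
  assumes g: "simple_function M (g :: 'a \<Rightarrow> complex)"
  shows "finite (g ` space M)" "\<And>y. y \<in> g ` space M \<Longrightarrow> g -` {y} \<inter> space M \<in> sets M"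
    "\<And>x. x \<in> space M \<Longrightarrow> g x = (\<Sum>y\<in>g ` space M. y * indicator (g -` {y} \<inter> space M) x)"
proof -
  show "finite (g ` space M)" using simple_functionD(1)[OF g] .
  show "\<And>y. y \<in> g ` space M \<Longrightarrow> g -` {y} \<inter> space M \<in> sets M" using simple_functionD(2)[OF g] by simp
  fix x assume x: "x \<in> space M"
  have "g x = (\<Sum>y\<in>g ` space M. indicator (g -` {y} \<inter> space M) x *\<^sub>R y)"
    by (rule simple_function_indicator_representation_banach[OF g x])
  also have "\<dots> = (\<Sum>y\<in>g ` space M. y * indicator (g -` {y} \<inter> space M) x)"
    by (intro sum.cong refl) (simp add: scaleR_conv_of_real of_real_indicator mult.commute)
  finally show "g x = (\<Sum>y\<in>g ` space M. y * indicator (g -` {y} \<inter> space M) x)" .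
qed

end


context mpr
begin

definition "Psi f g = complex_of_real \<alpha> * ((\<integral>x. f x \<partial>M) * cnj (\<integral>x. g x \<partial>M))
   + complex_of_real (1 - \<alpha>) * (\<integral>x. f x * cnj (g x) \<partial>M)"

lemma mpR: "mp (R n)" unfolding mp_def using R_meas R_distr by simp

lemma simple_lim:
  assumes H: "\<And>E F. E \<in> sets M \<Longrightarrow> F \<in> sets M \<Longrightarrow> (\<lambda>n. Q n E F) \<longlonglongrightarrow> Tgt E F"
    and fin: "finite I" "finite J"
    and A: "\<And>i. i \<in> I \<Longrightarrow> A i \<in> sets M" and Bs: "\<And>j. j \<in> J \<Longrightarrow> B j \<in> sets M"
    and f: "\<And>x. x \<in> space M \<Longrightarrow> f x = (\<Sum>i\<in>I. c i * indicator (A i) x)"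
    and g: "\<And>x. x \<in> space M \<Longrightarrow> g x = (\<Sum>j\<in>J. d j * indicator (B j) x)"
  shows "(\<lambda>n. ip M (R n) f g) \<longlonglongrightarrow> Psi f g"
proof -
  have e1: "ip M (R n) f g = (\<Sum>i\<in>I. \<Sum>j\<in>J. c i * cnj (d j) * complex_of_real (Q n (A i) (B j)))" for n
    unfolding Q_def by (rule expand[OF R_meas fin A Bs f g])
  have AB: "i \<in> I \<Longrightarrow> j \<in> J \<Longrightarrow> {x \<in> space M. x \<in> A i} \<inter> B j = A i \<inter> B j" for i j
    using A sets.sets_into_space by blast
  have ipid: "(\<integral>x. f x * cnj (g x) \<partial>M) = (\<Sum>i\<in>I. \<Sum>j\<in>J. c i * cnj (d j) * complex_of_real (measure M (A i \<inter> B j)))"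
  proof -
    have "(\<integral>x. f x * cnj (g x) \<partial>M) = ip M (\<lambda>x. x) f g" unfolding ip_def by simp
    also have "\<dots> = (\<Sum>i\<in>I. \<Sum>j\<in>J. c i * cnj (d j) * complex_of_real (measure M ({x \<in> space M. x \<in> A i} \<inter> B j)))"
      by (rule expand[OF measurable_ident_sets[OF refl] fin A Bs f g])
    also have "\<dots> = (\<Sum>i\<in>I. \<Sum>j\<in>J. c i * cnj (d j) * complex_of_real (measure M (A i \<inter> B j)))"
      using AB by simp
    finally show ?thesis .
  qed
  have intf: "(\<integral>x. f x \<partial>M) = (\<Sum>i\<in>I. c i * complex_of_real (measure M (A i)))" by (rule int_expand[OF fin(1) A f])
  have intg: "cnj (\<integral>x. g x \<partial>M) = (\<Sum>j\<in>J. cnj (d j) * complex_of_real (measure M (B j)))"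
    using int_expand[OF fin(2) Bs g] by simp
  have e2: "Psi f g = (\<Sum>i\<in>I. \<Sum>j\<in>J. c i * cnj (d j) * complex_of_real (Tgt (A i) (B j)))"
  proof -
    have "Psi f g = complex_of_real \<alpha> * (\<Sum>i\<in>I. \<Sum>j\<in>J. (c i * complex_of_real (measure M (A i))) * (cnj (d j) * complex_of_real (measure M (B j))))
        + complex_of_real (1 - \<alpha>) * (\<Sum>i\<in>I. \<Sum>j\<in>J. c i * cnj (d j) * complex_of_real (measure M (A i \<inter> B j)))"
      unfolding Psi_def intf intg ipid sum_product ..
    also have "\<dots> = (\<Sum>i\<in>I. \<Sum>j\<in>J. c i * cnj (d j) * complex_of_real (Tgt (A i) (B j)))"
      unfolding Tgt_def sum_distrib_left sum.distrib[symmetric]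
      by (intro sum.cong refl) (simp add: algebra_simps)
    finally show ?thesis .
  qed
  show ?thesis unfolding e1 e2
    by (intro tendsto_sum tendsto_mult_left tendsto_of_real H A Bs)
qed

lemma mpr_main:
  assumes H: "\<And>E F. E \<in> sets M \<Longrightarrow> F \<in> sets M \<Longrightarrow> (\<lambda>n. Q n E F) \<longlonglongrightarrow> Tgt E F"
    and f: "square_integrable M f" and g: "square_integrable M g"
  shows "(\<lambda>n. ip M (R n) f g) \<longlonglongrightarrow> Psi f g"
proof (rule metric_LIMSEQ_I)
  fix r :: real assume r: "r > 0"
  define \<epsilon> where "\<epsilon> = r / 3"
  have e: "\<epsilon> > 0" using r unfolding \<epsilon>_def by simp
  define C where "C = 4 * N2 f + 4 * N2 g + 1"
  have C1: "C \<ge> 1" unfolding C_def using N2_nonneg[of f] N2_nonneg[of g] by linarith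
  define \<delta> where "\<delta> = \<epsilon>\<^sup>2 / (4 * C\<^sup>2)"
  have dpos: "\<delta> > 0" using e C1 unfolding \<delta>_def by simp
  have dle: "\<delta> \<le> \<epsilon>\<^sup>2 / (4 * C)"
    unfolding \<delta>_def using C1 e by (intro divide_left_mono) (auto simp: power2_eq_square)
  obtain F where F: "\<And>i. simple_function M (F i)" "\<And>i. \<forall>x\<in>space M. norm (F i x) \<le> 2 * norm (f x)"
    "(\<lambda>i. N2 (\<lambda>x. f x - F i x)) \<longlonglongrightarrow> 0" using approx_seq[OF f] by blast
  obtain G where G: "\<And>i. simple_function M (G i)" "\<And>i. \<forall>x\<in>space M. norm (G i x) \<le> 2 * norm (g x)"
    "(\<lambda>i. N2 (\<lambda>x. g x - G i x)) \<longlonglongrightarrow> 0" using approx_seq[OF g] by blast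
  obtain i where i: "N2 (\<lambda>x. f x - F i x) < \<delta>"
    using order_tendstoD(2)[OF F(3) dpos] by (auto simp: eventually_sequentially)
  obtain j where j: "N2 (\<lambda>x. g x - G j x) < \<delta>"
    using order_tendstoD(2)[OF G(3) dpos] by (auto simp: eventually_sequentially)
  define f' where "f' = F i"
  define g' where "g' = G j"
  have f': "square_integrable M f'" "N2 f' \<le> 4 * N2 f" using simple_sq[OF F(1) f F(2)] unfolding f'_def by auto
  have g': "square_integrable M g'" "N2 g' \<le> 4 * N2 g" using simple_sq[OF G(1) g G(2)] unfolding g'_def by auto
  have fC: "N2 f' \<le> C" and gC: "N2 g \<le> C" and g'C: "N2 g' \<le> C" and fC0: "N2 f \<le> C"
    using f'(2) g'(2) N2_nonneg[of f] N2_nonneg[of g] unfolding C_def by linarith+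
  have df: "N2 (\<lambda>x. f x - f' x) \<le> \<delta>" and dg: "N2 (\<lambda>x. g x - g' x) \<le> \<delta>"
    using i j unfolding f'_def g'_def by auto
  have lim': "(\<lambda>n. ip M (R n) f' g') \<longlonglongrightarrow> Psi f' g'"
    unfolding f'_def g'_def
  proof (rule simple_lim[OF H, where I="F i ` space M" and J="G j ` space M"
        and A="\<lambda>y. F i -` {y} \<inter> space M" and B="\<lambda>y. G j -` {y} \<inter> space M" and c="\<lambda>y. y" and d="\<lambda>y. y"])
    show "finite (F i ` space M)" "finite (G j ` space M)" using simple_rep(1) F(1) G(1) by auto
    show "\<And>y. y \<in> F i ` space M \<Longrightarrow> F i -` {y} \<inter> space M \<in> sets M" using simple_rep(2)[OF F(1)] by blast
    show "\<And>y. y \<in> G j ` space M \<Longrightarrow> G j -` {y} \<inter> space M \<in> sets M" using simple_rep(2)[OF G(1)] by blast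
    show "\<And>x. x \<in> space M \<Longrightarrow> F i x = (\<Sum>y\<in>F i ` space M. y * indicator (F i -` {y} \<inter> space M) x)"
      using simple_rep(3)[OF F(1)] by blast
    show "\<And>x. x \<in> space M \<Longrightarrow> G j x = (\<Sum>y\<in>G j ` space M. y * indicator (G j -` {y} \<inter> space M) x)"
      using simple_rep(3)[OF G(1)] by blast
  qed
  obtain n0 where n0: "\<forall>n\<ge>n0. dist (ip M (R n) f' g') (Psi f' g') < \<epsilon>"
    using metric_LIMSEQ_D[OF lim' e] by blast
  have c1: "norm (ip M (R n) f g - ip M (R n) f' g') \<le> \<epsilon>" for n
    by (rule ip_close[OF mpR f f'(1) g g'(1) e C1 gC fC]) (use df dg dle in auto)
  have c2: "norm (Psi f g - Psi f' g') \<le> \<epsilon>"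
  proof -
    define \<eta> where "\<eta> = \<epsilon> / (2 * C)"
    have eta: "\<eta> > 0" using e C1 unfolding \<eta>_def by simp
    have eta2: "\<eta>\<^sup>2 = \<delta>" unfolding \<eta>_def \<delta>_def by (simp add: power2_eq_square)
    have if1: "norm ((\<integral>x. f x \<partial>M) - (\<integral>x. f' x \<partial>M)) \<le> \<eta>" by (rule int_close[OF f f'(1) eta]) (use df eta2 in simp)
    have ig1: "norm ((\<integral>x. g x \<partial>M) - (\<integral>x. g' x \<partial>M)) \<le> \<eta>" by (rule int_close[OF g g'(1) eta]) (use dg eta2 in simp)
    have "(N2 g + 1) / 2 \<le> C" using gC C1 by simp
    then have bg: "norm (\<integral>x. g x \<partial>M) \<le> C" by (rule order_trans[OF int_bound[OF g]])
    have "(N2 f' + 1) / 2 \<le> C" using fC C1 by simp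
    then have bf': "norm (\<integral>x. f' x \<partial>M) \<le> C" by (rule order_trans[OF int_bound[OF f'(1)]])
    have "(\<integral>x. f x \<partial>M) * cnj (\<integral>x. g x \<partial>M) - (\<integral>x. f' x \<partial>M) * cnj (\<integral>x. g' x \<partial>M)
        = ((\<integral>x. f x \<partial>M) - (\<integral>x. f' x \<partial>M)) * cnj (\<integral>x. g x \<partial>M)
          + (\<integral>x. f' x \<partial>M) * cnj ((\<integral>x. g x \<partial>M) - (\<integral>x. g' x \<partial>M))"
      by (simp add: algebra_simps)
    then have "norm ((\<integral>x. f x \<partial>M) * cnj (\<integral>x. g x \<partial>M) - (\<integral>x. f' x \<partial>M) * cnj (\<integral>x. g' x \<partial>M))
        \<le> \<eta> * C + C * \<eta>"
      using if1 ig1 bg bf' norm_triangle_ineq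
      by (smt (verit, best) complex_mod_cnj mult_mono norm_ge_zero norm_mult)
    also have "\<dots> = \<epsilon>" unfolding \<eta>_def using C1 by simp
    finally have p1: "norm ((\<integral>x. f x \<partial>M) * cnj (\<integral>x. g x \<partial>M) - (\<integral>x. f' x \<partial>M) * cnj (\<integral>x. g' x \<partial>M)) \<le> \<epsilon>" .
    have p2: "norm ((\<integral>x. f x * cnj (g x) \<partial>M) - (\<integral>x. f' x * cnj (g' x) \<partial>M)) \<le> \<epsilon>"
      using ip_close[OF mp_id f f'(1) g g'(1) e C1 gC fC] df dg dle unfolding ip_def by simp
    have "Psi f g - Psi f' g' = complex_of_real \<alpha> * ((\<integral>x. f x \<partial>M) * cnj (\<integral>x. g x \<partial>M) - (\<integral>x. f' x \<partial>M) * cnj (\<integral>x. g' x \<partial>M))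
        + complex_of_real (1 - \<alpha>) * ((\<integral>x. f x * cnj (g x) \<partial>M) - (\<integral>x. f' x * cnj (g' x) \<partial>M))"
      unfolding Psi_def by (simp add: algebra_simps)
    then have "norm (Psi f g - Psi f' g') \<le> \<alpha> * \<epsilon> + (1 - \<alpha>) * \<epsilon>"
      using p1 p2 \<alpha>0 \<alpha>1 norm_triangle_ineq
      by (smt (verit, best) mult_left_mono norm_mult norm_of_real)
    then show ?thesis by (simp add: algebra_simps)
  qed
  have "\<forall>n\<ge>n0. dist (ip M (R n) f g) (Psi f g) < r"
  proof (intro allI impI)
    fix n assume "n \<ge> n0"
    then have a: "norm (ip M (R n) f' g' - Psi f' g') < \<epsilon>" using n0 by (simp add: dist_norm)
    have "dist (ip M (R n) f g) (Psi f g) \<le> norm (ip M (R n) f g - ip M (R n) f' g') + norm (ip M (R n) f' g' - Psi f' g') + norm (Psi f' g' - Psi f g)"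
      unfolding dist_norm by (rule norm_diff_triangle_le) (rule norm_diff_triangle_le, auto)
    also have "\<dots> < \<epsilon> + \<epsilon> + \<epsilon>" using c1[of n] a c2 by (simp add: norm_minus_commute)
    finally show "dist (ip M (R n) f g) (Psi f g) < r" unfolding \<epsilon>_def by simp
  qed
  then show "\<exists>no. \<forall>n\<ge>no. dist (ip M (R n) f g) (Psi f g) < r" by blast
qed

end

context r1
begin

lemma distr_Tinv: "distr M M Tinv = M"
proof (rule measure_eqI)
  show "sets (distr M M Tinv) = sets M" by simp
  fix A assume A: "A \<in> sets (distr M M Tinv)"
  then have A': "A \<in> sets M" by simp
  have "emeasure (distr M M Tinv) A = emeasure M (Tinv -` A \<inter> space M)"
    by (rule emeasure_distr[OF Tinv_meas A'])
  also have "Tinv -` A \<inter> space M = (T ^^ 1) ` A"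
    using img_eq[OF sets_space[OF A'], of 1] by auto
  also have "emeasure M ((T ^^ 1) ` A) = emeasure M A"
    using measure_img[OF A', of 1] img_sets[OF A', of 1] A' by (simp add: emeasure_eq_measure)
  finally show "emeasure (distr M M Tinv) A = emeasure M A" .
qed

lemma distr_Tinvk: "distr M M (Tinv ^^ k) = M"
proof (induction k)
  case 0
  then show ?case by (simp add: distr_id2)
next
  case (Suc k)
  have "distr M M (Tinv ^^ Suc k) = distr M M (Tinv \<circ> Tinv ^^ k)" by simp
  also have "\<dots> = distr (distr M M (Tinv ^^ k)) M Tinv"
    by (rule distr_distr[symmetric, OF Tinv_meas Tinvk_meas])
  also have "\<dots> = M" using Suc distr_Tinv by simp
  finally show ?case .
qed

lemma ipow_meas: "ipow T Tinv k \<in> measurable M M"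
  unfolding ipow_def using Tk_meas Tinvk_meas by simp

lemma ipow_distr: "distr M M (ipow T Tinv k) = M"
  unfolding ipow_def using distr_Tk distr_Tinvk by simp

end

sublocale r1m \<subseteq> mpr M "\<lambda>n. ipow T Tinv (- (l n * int (ht n)))" \<alpha>
  by unfold_locales (use ipow_meas ipow_distr \<alpha>_pos \<alpha>_lt1 in auto)

context r1m
begin

lemma ev_l: "\<exists>N1. \<forall>n\<ge>N1. 0 < l n \<and> l n \<le> int (q n)"
proof -
  have "eventually (\<lambda>n. real_of_int (l n) / real (p n) > 0) sequentially"
    using order_tendstoD(1)[OF x_lim] \<alpha>_pos by simp
  moreover have "eventually (\<lambda>n. real_of_int (l n) / real (p n) < 1 / 2) sequentially"
    using order_tendstoD(2)[OF x_lim, of "1 / 2"] \<alpha>_lt1 by simp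
  ultimately have "eventually (\<lambda>n. 0 < l n \<and> l n \<le> int (q n)) sequentially"
  proof (rule eventually_elim2)
    fix n assume a: "real_of_int (l n) / real (p n) > 0" "real_of_int (l n) / real (p n) < 1 / 2"
    have pp: "real (p n) > 0" using p2[of n] by simp
    have "real_of_int (l n) > 0" using a(1) pp by (simp add: zero_less_divide_iff)
    moreover have "real_of_int (l n) < real (p n) / 2" using a(2) pp by (simp add: divide_less_eq)
    moreover have "real (p n) / 2 = real (q n)" using p_2q[of n] by simp
    ultimately show "0 < l n \<and> l n \<le> int (q n)" by linarith
  qed
  then show ?thesis by (simp add: eventually_sequentially)
qed

lemma lim_levels:
  assumes K0: "K0 \<subseteq> {..<ht n0}" and J0: "J0 \<subseteq> {..<ht n1}"
  shows "(\<lambda>n. Q n (\<Union>k\<in>K0. Lev n0 k) (\<Union>k\<in>J0. Lev n1 k)) \<longlonglongrightarrow> Tgt (\<Union>k\<in>K0. Lev n0 k) (\<Union>k\<in>J0. Lev n1 k)"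
proof -
  define E where "E = (\<Union>k\<in>K0. Lev n0 k)"
  define F where "F = (\<Union>k\<in>J0. Lev n1 k)"
  obtain N1 where N1: "\<forall>n\<ge>N1. 0 < l n \<and> l n \<le> int (q n)" using ev_l by blast
  have bound: "\<bar>Q n E F - Tgt E F\<bar> \<le> eps n" if n: "n \<ge> max N1 (max n0 n1)" for n
  proof -
    have ln: "0 < l n" "l n \<le> int (q n)" using N1 n by auto
    obtain K where K: "K \<subseteq> {..<ht n}" "E = (\<Union>k\<in>K. Lev n k)" using UL_ge[OF _ K0, of n] n unfolding E_def by auto
    obtain J where J: "J \<subseteq> {..<ht n}" "F = (\<Union>k\<in>J. Lev n k)" using UL_ge[OF _ J0, of n] n unfolding F_def by auto
    have fK: "finite K" "finite J" using K J finite_subset by blast+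
    have Rn: "ipow T Tinv (- (l n * int (ht n))) = Tinv ^^ (nat (l n) * ht n)"
    proof -
      have "int (ht n) > 0" using ht_pos[of n] by simp
      then have "l n * int (ht n) > 0" using ln(1) by (rule mult_pos_pos[rotated])
      then have "\<not> (- (l n * int (ht n)) \<ge> 0)" by simp
      moreover have "nat (- (- (l n * int (ht n)))) = nat (l n) * ht n" using ln(1) by (simp add: nat_mult_distrib)
      ultimately show ?thesis unfolding ipow_def by simp
    qed
    have Es: "E \<subseteq> space M" using K(2) Lev_space by blast
    have pre: "{x \<in> space M. ipow T Tinv (- (l n * int (ht n))) x \<in> E} = (T ^^ (nat (l n) * ht n)) ` E"
      unfolding Rn using img_eq[OF Es] by simp
    have Qe: "Q n E F = measure M ((T ^^ (nat (l n) * ht n)) ` (\<Union>k\<in>K. Lev n k) \<inter> (\<Union>k\<in>J. Lev n k))"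
      unfolding Q_def pre using K J by simp
    have KJ: "K \<inter> J \<subseteq> {..<ht n}" using K(1) by auto
    have Te: "Tgt E F = (1 - \<alpha>) * \<beta> n * card (K \<inter> J) + \<alpha> * (\<beta> n)\<^sup>2 * card K * card J"
      unfolding Tgt_def K(2) J(2) UL_int[OF K(1) J(1)] measure_UL[OF K(1)] measure_UL[OF J(1)]
        measure_UL[OF KJ] by (simp add: power2_eq_square algebra_simps)
    show ?thesis unfolding Qe Te by (rule stage_bound[OF less_imp_le[OF ln(1)] ln(2) K(1) J(1)])
  qed
  have "(\<lambda>n. Q n E F - Tgt E F) \<longlonglongrightarrow> 0"
  proof (rule Lim_null_comparison[OF _ eps_lim])
    show "\<forall>\<^sub>F n in sequentially. norm (Q n E F - Tgt E F) \<le> eps n"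
      unfolding eventually_sequentially using bound by (intro exI[of _ "max N1 (max n0 n1)"]) simp
  qed
  then show ?thesis unfolding E_def[symmetric] F_def[symmetric] by (simp add: LIM_zero_iff)
qed

lemma lim_sets:
  assumes E: "E \<in> sets M" and F: "F \<in> sets M"
  shows "(\<lambda>n. Q n E F) \<longlonglongrightarrow> Tgt E F"
proof (rule approx_lim[OF E F])
  fix e :: real assume e: "e > 0"
  obtain n0 K0 where K0: "K0 \<subseteq> {..<ht n0}"
    "measure M ((E - (\<Union>k\<in>K0. (T ^^ k) ` B n0)) \<union> ((\<Union>k\<in>K0. (T ^^ k) ` B n0) - E)) < e"
    using approx[OF E e] by blast
  obtain n1 J0 where J0: "J0 \<subseteq> {..<ht n1}"
    "measure M ((F - (\<Union>k\<in>J0. (T ^^ k) ` B n1)) \<union> ((\<Union>k\<in>J0. (T ^^ k) ` B n1) - F)) < e"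
    using approx[OF F e] by blast
  have fin: "finite K0" "finite J0" using K0(1) J0(1) finite_subset by blast+
  show "\<exists>E' F'. E' \<in> sets M \<and> F' \<in> sets M \<and> measure M (symd E E') < e \<and> measure M (symd F F') < e
      \<and> (\<lambda>n. Q n E' F') \<longlonglongrightarrow> Tgt E' F'"
    using K0(2) J0(2) lim_levels[OF K0(1) J0(1)] UL_sets[OF fin(1)] UL_sets[OF fin(2)]
    unfolding symd_def Lev_def by blast
qed

theorem r1m_main:
  assumes f: "square_integrable M f" and g: "square_integrable M g"
  shows "(\<lambda>n. \<integral>x. f (ipow T Tinv (- (l n * int (rk1_height p s n))) x) * cnj (g x) \<partial>M)
       \<longlonglongrightarrow> complex_of_real \<alpha> * ((\<integral>x. f x \<partial>M) * cnj (\<integral>x. g x \<partial>M))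
           + complex_of_real (1 - \<alpha>) * (\<integral>x. f x * cnj (g x) \<partial>M)"
  using mpr_main[OF lim_sets f g] unfolding ip_def Psi_def .

end

theorem mainTheorem13:
  fixes M :: "'a measure" and T Tinv :: "'a \<Rightarrow> 'a"
    and p :: "nat \<Rightarrow> nat" and s :: "nat \<Rightarrow> nat \<Rightarrow> nat"
    and B :: "nat \<Rightarrow> 'a set" and C :: "nat \<Rightarrow> nat \<Rightarrow> 'a set"
    and \<alpha> :: real and l :: "nat \<Rightarrow> int"
  assumes sys: "rank_one_system M T Tinv p s B C"
    and p_even: "\<forall>n. even (p n)"
    and s_def: "\<forall>n j. j < p n \<longrightarrow> s n j = (if j < p n div 2 then 0 else 1)"
    and p_h: "filterlim (\<lambda>n. real (p n) / real (rk1_height p s n)) at_top sequentially"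
    and \<alpha>_pos: "0 < \<alpha>" and \<alpha>_lt1: "\<alpha> < 1"
    and l_dvd: "\<forall>n. (int (rk1_height p s n) + 1) dvd l n"
    and l_asymp: "(\<lambda>n. real_of_int (l n) - \<alpha> * real (p n) / 2) \<in> o(\<lambda>n. real (p n))"
  shows "\<forall>f g. square_integrable M f \<longrightarrow> square_integrable M g \<longrightarrow>
     (\<lambda>n. \<integral>x. f (ipow T Tinv (- (l n * int (rk1_height p s n))) x) * cnj (g x) \<partial>M)
       \<longlonglongrightarrow> complex_of_real \<alpha> * ((\<integral>x. f x \<partial>M) * cnj (\<integral>x. g x \<partial>M))
           + complex_of_real (1 - \<alpha>) * (\<integral>x. f x * cnj (g x) \<partial>M)"
  proof -
  interpret r1m M T Tinv p s B C \<alpha> l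
    by unfold_locales (use sys p_even s_def p_h \<alpha>_pos \<alpha>_lt1 l_dvd l_asymp in auto)
  show ?thesis using r1m_main by blast
qed

end
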